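(* Let $\hat K=[0,1]^2$ with centroid $(x_{\hat K},y_{\hat K})=(1/2,1/2)$, let $\kappa>0$, and let $\epsilon$ be a real, strictly positive, smooth function on $\hat K$. Let $n\in\mathbb{N}$ with $n\ge2$, $p=2n+1$ and $q\ge n+1$. Then there is a constant $C$ independent of $\kappa$ (but possibly depending on $p$) such that $$\inf_{v\in GPW_\kappa^{p,q}(\hat K)}\|f-v\|_{L^2(\hat K)}\le C\kappa^2|\epsilon(x_{\hat K},y_{\hat K})|\,\|f\|_{L^2(\hat K)}\quad\text{for all } f\in\mathcal{P}_1(\mathbb{R}^2),$$ where $\mathcal{P}_1(\mathbb{R}^2)$ is the space of real bivariate polynomials of total degree at most 1.
   Context: Notation: $\mathrm{i}=\sqrt{-1}$. Generalized plane waves (GPWs) on a domain $K$ with distinguished point (centroid) $(x_K,y_K)$: for $\kappa>0$, integer $q\ge1$, $\epsilon$ real, strictly positive and $\mathcal{C}^{q-1}$ on $K$, and direction $\theta$, the GPW is $\varphi=e^{P}$ with $P(x,y)=\sum_{0\le i+j\le q+1}\lambda_{i,j}(x-x_K)^i(y-y_K)^j$, where $\lambda_{0,0}=0$; $(\lambda_{1,0},\lambda_{0,1})=\mathrm{i}\kappa\sqrt{\epsilon(x_K,y_K)}(\cos\theta,\sin\theta)$; $\lambda_{i,j}=0$ for $i\in\{0,1\}$, $2\le i+j\le q+1$; and for $0\le i+j\le q-1$, $$\lambda_{i+2,j}=\frac{1}{(i+2)(i+1)}\Big(-\kappa^2\frac{\partial_x^i\partial_y^j\epsilon(x_K,y_K)}{i!\,j!}-(j+2)(j+1)\lambda_{i,j+2}-\sum_{k=0}^{i}\sum_{l=0}^{j}(i-k+1)(k+1)\lambda_{i-k+1,j-l}\lambda_{k+1,l}-\sum_{k=0}^{j}\sum_{l=0}^{i}(j-k+1)(k+1)\lambda_{i-l,j-k+1}\lambda_{l,k+1}\Big).$$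 $GPW_\kappa^{p,q}(K)$ is the (complex) span of the $p$ GPWs with directions $\theta_l=2\pi(l-1)/p$, $l=1,\dots,p$. *)

theory Defs
  imports "HOL-Analysis.Analysis"
begin

definition Khat :: "(real \<times> real) set" where
  "Khat = cbox (0,0) (1,1)"

definition centroid_Khat :: "real \<times> real" where
  "centroid_Khat = (1/2, 1/2)"

text \<open>Smoothness of eps on a set K, witnessed by the family D of all partial
  derivatives: D i j is the partial derivative d_x^i d_y^j of eps, where the
  derivatives are taken within K (one-sided at the boundary) and all of them are continuous.\<close>
definition smooth_family ::
  "(real \<times> real) set \<Rightarrow> (real \<times> real \<Rightarrow> real) \<Rightarrow> (nat \<Rightarrow> nat \<Rightarrow> real \<times> real \<Rightarrow> real) \<Rightarrow> bool" where
  "smooth_family K e D \<longleftrightarrow>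
     (\<forall>z\<in>K. D 0 0 z = e z) \<and>
     (\<forall>i j. continuous_on K (D i j)) \<and>
     (\<forall>i j x y. (x, y) \<in> K \<longrightarrow>
        ((\<lambda>t. D i j (t, y)) has_real_derivative D (Suc i) j (x, y)) (at x within {t. (t, y) \<in> K}) \<and>
        ((\<lambda>t. D i j (x, t)) has_real_derivative D i (Suc j) (x, y)) (at y within {t. (x, t) \<in> K}))"

text \<open>GPW coefficients lambda_{i,j}. Parameters: kappa, the values
  d i j = d_x^i d_y^j eps (x_K,y_K), the direction theta and q.
  Coefficients with i+j > q+1 do not occur in P and are set to 0.\<close>
function gpw_coef :: "real \<Rightarrow> (nat \<Rightarrow> nat \<Rightarrow> real) \<Rightarrow> real \<Rightarrow> nat \<Rightarrow> nat \<Rightarrow> nat \<Rightarrow> complex" where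
  "gpw_coef \<kappa> d \<theta> q 0 j =
     (if j = 1 then \<i> * of_real (\<kappa> * sqrt (d 0 0) * sin \<theta>) else 0)"
| "gpw_coef \<kappa> d \<theta> q (Suc 0) j =
     (if j = 0 then \<i> * of_real (\<kappa> * sqrt (d 0 0) * cos \<theta>) else 0)"
| "gpw_coef \<kappa> d \<theta> q (Suc (Suc i)) j =
     (if i + j + 2 > q + 1 then 0 else
       (1 / of_nat ((i + 2) * (i + 1))) *
        ( - of_real (\<kappa>^2 * d i j / (fact i * fact j))
          - of_nat ((j + 2) * (j + 1)) * gpw_coef \<kappa> d \<theta> q i (j + 2)
          - (\<Sum>k\<in>{0..i}. \<Sum>l\<in>{0..j}. of_nat ((i - k + 1) * (k + 1)) *
               gpw_coef \<kappa> d \<theta> q (i - k + 1) (j - l) * gpw_coef \<kappa> d \<theta> q (k + 1) l)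
          - (\<Sum>k\<in>{0..j}. \<Sum>l\<in>{0..i}. of_nat ((j - k + 1) * (k + 1)) *
               gpw_coef \<kappa> d \<theta> q (i - l) (j - k + 1) * gpw_coef \<kappa> d \<theta> q l (k + 1))))"
  by pat_completeness auto
termination
  by (relation "Wellfounded.measure (\<lambda>(\<kappa>, d, \<theta>, q, i, j). i)") auto

definition gpw :: "real \<Rightarrow> (nat \<Rightarrow> nat \<Rightarrow> real) \<Rightarrow> real \<Rightarrow> nat \<Rightarrow> real \<times> real \<Rightarrow> real \<times> real \<Rightarrow> complex" where
  "gpw \<kappa> d \<theta> q c z =
     exp (\<Sum>(i, j)\<in>{(i, j). i + j \<le> q + 1}.
            gpw_coef \<kappa> d \<theta> q i j * of_real ((fst z - fst c) ^ i * (snd z - snd c) ^ j))"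

definition gpw_space :: "real \<Rightarrow> (nat \<Rightarrow> nat \<Rightarrow> real) \<Rightarrow> nat \<Rightarrow> nat \<Rightarrow> real \<times> real \<Rightarrow> (real \<times> real \<Rightarrow> complex) set" where
  "gpw_space \<kappa> d p q c =
     {v. \<exists>a :: nat \<Rightarrow> complex. v = (\<lambda>z. \<Sum>l\<in>{1..p}.
           a l * gpw \<kappa> d (2 * pi * (real l - 1) / real p) q c z)}"

definition L2_norm :: "(real \<times> real) set \<Rightarrow> (real \<times> real \<Rightarrow> complex) \<Rightarrow> real" where
  "L2_norm K g = sqrt (integral K (\<lambda>z. (cmod (g z))^2))"

definition P1 :: "(real \<times> real \<Rightarrow> complex) set" where
  "P1 = {f. \<exists>a b c :: real. f = (\<lambda>z. of_real (a + b * fst z + c * snd z))}"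

end

theory Submission
  imports Defs
begin

lemma sin_treble: "sin (3 * x) = 3 * sin x - 4 * sin x ^ 3" for x :: real
proof -
  have "sin (3*x) = sin (2*x + x)" by simp
  also have "... = sin (2*x) * cos x + cos (2*x) * sin x" by (rule sin_add)
  also have "... = 3 * sin x - 4 * sin x ^ 3"
  proof -
    have "cos x * cos x = 1 - sin x * sin x" using sin_cos_squared_add[of x] by (simp add: power2_eq_square)
    then show ?thesis unfolding sin_double cos_double power2_eq_square power3_eq_cube
      by algebra
  qed
  finally show ?thesis .
qed

definition th :: "nat \<Rightarrow> nat \<Rightarrow> real" where "th p l = 2 * pi * (real l - 1) / real p"

lemma cis_sum_zero:
  fixes p k :: nat assumes "0 < k" "k < p"
  shows "(\<Sum>l\<in>{1..p}. cis (real k * th p l)) = 0"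
proof -
  define w where "w = cis (2*pi*real k/real p)"
  have e: "cis (real k * th p l) = w ^ (l - 1)" if "l \<in> {1..p}" for l
  proof -
    have "w^(l-1) = cis(real (l-1) * (2*pi*real k/real p))" unfolding w_def by (simp add: Complex.DeMoivre)
    also have "... = cis (real k * th p l)" using that unfolding th_def
      by (intro arg_cong[where f=cis]) (auto simp: of_nat_diff field_simps)
    finally show ?thesis by simp
  qed
  have "(\<Sum>l\<in>{1..p}. cis (real k * th p l)) = (\<Sum>l\<in>{1..p}. w ^ (l - 1))"
    using e by (rule sum.cong[OF refl])
  also have "... = (\<Sum>m<p. w ^ m)"
  proof -
    have "(\<Sum>l\<in>{1..p}. w ^ (l - 1)) = (\<Sum>m\<in>{0..<p}. w ^ m)"
      by (rule sum.reindex_bij_witness[of _ Suc "\<lambda>l. l - 1"]) auto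
    then show ?thesis by (simp add: lessThan_atLeast0)
  qed
  also have "... = 0"
  proof -
    have wp: "w ^ p = 1"
    proof -
      have "w ^ p = cis (real p * (2*pi*real k/real p))" unfolding w_def by (rule Complex.DeMoivre)
      also have "real p * (2*pi*real k/real p) = 2 * pi * real k" using assms by simp
      also have "cis (2 * pi * real k) = 1" by (simp add: complex_eq_iff)
      finally show ?thesis .
    qed
    have "w \<noteq> 1"
    proof
      assume "w = 1"
      then obtain n :: int where "2*pi*real k/real p = 2 * pi * of_int n"
        by (auto simp: w_def complex_eq_iff cos_one_2pi_int)
      then have "real k = real p * of_int n" using assms by (simp add: field_simps)
      then have "int k = int p * n" by (metis of_int_eq_iff of_int_mult of_int_of_nat_eq)
      moreover have "0 < int p * n" using assms calculation by linarith
      then have "n > 0" using assms by (simp add: zero_less_mult_iff)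
      then have "int p * n \<ge> int p * 1" by (intro mult_left_mono) auto
      ultimately show False using assms by linarith
    qed
    then show ?thesis using wp by (simp add: sum_gp_strict)
  qed
  finally show ?thesis .
qed
lemma cos_sum_zero: "0 < k \<Longrightarrow> k < p \<Longrightarrow> (\<Sum>l\<in>{1..p}. cos (real k * th p l)) = 0"
  using arg_cong[OF cis_sum_zero, of k p Re] by (simp add: Re_sum)
lemma sin_sum_zero: "0 < k \<Longrightarrow> k < p \<Longrightarrow> (\<Sum>l\<in>{1..p}. sin (real k * th p l)) = 0"
  using arg_cong[OF cis_sum_zero, of k p Im] by (simp add: Im_sum)

lemma trig_sums:
  assumes "3 < p"
  shows "(\<Sum>l\<in>{1..p}. cos (th p l)) = 0" "(\<Sum>l\<in>{1..p}. sin (th p l)) = 0"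
    "(\<Sum>l\<in>{1..p}. cos (th p l)^2) = real p / 2" "(\<Sum>l\<in>{1..p}. sin (th p l)^2) = real p / 2"
    "(\<Sum>l\<in>{1..p}. cos (th p l) * sin (th p l)) = 0"
    "(\<Sum>l\<in>{1..p}. cos (th p l)^3) = 0" "(\<Sum>l\<in>{1..p}. sin (th p l)^3) = 0"
    "(\<Sum>l\<in>{1..p}. cos (th p l)^2 * sin (th p l)) = 0"
    "(\<Sum>l\<in>{1..p}. cos (th p l) * sin (th p l)^2) = 0"
proof -
  have c1: "(\<Sum>l\<in>{1..p}. cos (th p l)) = 0" using cos_sum_zero[of 1 p] assms by simp
  have s1: "(\<Sum>l\<in>{1..p}. sin (th p l)) = 0" using sin_sum_zero[of 1 p] assms by simp
  have c2: "(\<Sum>l\<in>{1..p}. cos (2 * th p l)) = 0" using cos_sum_zero[of 2 p] assms by simp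
  have s2: "(\<Sum>l\<in>{1..p}. sin (2 * th p l)) = 0" using sin_sum_zero[of 2 p] assms by simp
  have c3: "(\<Sum>l\<in>{1..p}. cos (3 * th p l)) = 0" using cos_sum_zero[of 3 p] assms by simp
  have s3: "(\<Sum>l\<in>{1..p}. sin (3 * th p l)) = 0" using sin_sum_zero[of 3 p] assms by simp
  have sq: "sin x ^ 2 = 1 - cos x ^ 2" for x :: real using sin_cos_squared_add[of x] by linarith
  have sq2: "cos x ^ 2 = 1 - sin x ^ 2" for x :: real using sin_cos_squared_add[of x] by linarith
  have cc: "cos x ^ 2 = 1/2 + cos (2*x) / 2" for x :: real using cos_double[of x] sq[of x] by linarith
  have ssq: "sin x ^ 2 = 1/2 - cos (2*x) / 2" for x :: real using cos_double[of x] sq[of x] by linarith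
  have cs: "cos x * sin x = sin (2*x) / 2" for x :: real by (simp add: sin_double)
  have ccc: "cos x ^ 3 = 3/4 * cos x + cos (3*x) / 4" for x :: real using cos_treble_cos[of x] by linarith
  have sss: "sin x ^ 3 = 3/4 * sin x - sin (3*x) / 4" for x :: real using sin_treble[of x] by linarith
  have ccs: "cos x ^ 2 * sin x = sin x / 4 + sin (3*x) / 4" for x :: real
  proof -
    have "cos x ^ 2 * sin x = (1 - sin x ^ 2) * sin x" by (simp add: sq2)
    also have "... = sin x - sin x^3" by (simp add: power2_eq_square power3_eq_cube algebra_simps)
    finally show ?thesis using sin_treble[of x] by linarith
  qed
  have css: "cos x * sin x ^ 2 = cos x / 4 - cos (3*x) / 4" for x :: real
  proof -
    have "cos x * sin x ^ 2 = cos x * (1 - cos x^2)" by (simp add: sq)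
    also have "... = cos x - cos x^3" by (simp add: power2_eq_square power3_eq_cube algebra_simps)
    finally show ?thesis using cos_treble_cos[of x] by linarith
  qed
  show "(\<Sum>l\<in>{1..p}. cos (th p l)) = 0" by (fact c1)
  show "(\<Sum>l\<in>{1..p}. sin (th p l)) = 0" by (fact s1)
  show "(\<Sum>l\<in>{1..p}. cos (th p l)^2) = real p / 2"
    unfolding cc using c1 c2 c3 s1 s2 s3 by (simp add: sum.distrib sum_divide_distrib[symmetric])
  show "(\<Sum>l\<in>{1..p}. sin (th p l)^2) = real p / 2"
    unfolding ssq using c1 c2 c3 s1 s2 s3 by (simp add: sum_subtractf sum_divide_distrib[symmetric])
  show "(\<Sum>l\<in>{1..p}. cos (th p l) * sin (th p l)) = 0"
    unfolding cs using c1 c2 c3 s1 s2 s3 by (simp add: sum_divide_distrib[symmetric])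
  show "(\<Sum>l\<in>{1..p}. cos (th p l)^3) = 0"
    unfolding ccc using c1 c2 c3 s1 s2 s3 by (simp add: sum.distrib sum_divide_distrib[symmetric] sum_distrib_left[symmetric])
  show "(\<Sum>l\<in>{1..p}. sin (th p l)^3) = 0"
    unfolding sss using c1 c2 c3 s1 s2 s3 by (simp add: sum_subtractf sum_divide_distrib[symmetric] sum_distrib_left[symmetric])
  show "(\<Sum>l\<in>{1..p}. cos (th p l)^2 * sin (th p l)) = 0"
    unfolding ccs using c1 c2 c3 s1 s2 s3 by (simp add: sum.distrib sum_divide_distrib[symmetric])
  show "(\<Sum>l\<in>{1..p}. cos (th p l) * sin (th p l)^2) = 0"
    unfolding css using c1 c2 c3 s1 s2 s3 by (simp add: sum_subtractf sum_divide_distrib[symmetric])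
qed

lemma exp_rem3:
  fixes x :: complex assumes "norm x \<le> 1"
  shows "norm (exp x - 1 - x - x^2/2) \<le> 3 * norm x ^ 3"
proof -
  have e: "exp x = (\<Sum>n<3. inverse(fact n) *\<^sub>R (x ^ n)) + (\<Sum>n. inverse(fact (n + 3)) *\<^sub>R (x ^ (n + 3)))"
    by (rule exp_first_terms)
  have f3: "(\<Sum>n<3. inverse(fact n) *\<^sub>R (x ^ n)) = 1 + x + x^2/2"
    by (simp add: eval_nat_numeral scaleR_conv_of_real field_simps)
  define r where "r = norm x"
  have r0: "0 \<le> r" and r1: "r \<le> 1" using assms by (auto simp: r_def)
  have sx: "summable (\<lambda>n. inverse(fact (n + 3)) *\<^sub>R (x ^ (n + 3)))"
    by (rule summable_exp_generic[THEN summable_ignore_initial_segment])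
  have snorm: "summable (\<lambda>n. norm (inverse(fact (n + 3)) *\<^sub>R (x ^ (n + 3))))"
    using summable_exp_generic[of r, THEN summable_ignore_initial_segment, of 3]
    by (simp add: r_def norm_power)
  have sb: "summable (\<lambda>n. r^3 * (inverse (fact n) * r ^ n))"
    using summable_exp_generic[of r] by (intro summable_mult) simp
  have "norm (exp x - 1 - x - x^2/2) = norm (\<Sum>n. inverse(fact (n + 3)) *\<^sub>R (x ^ (n + 3)))"
    using e f3 by simp
  also have "\<dots> \<le> (\<Sum>n. norm (inverse(fact (n + 3)) *\<^sub>R (x ^ (n + 3))))"
    by (rule summable_norm[OF snorm])
  also have "\<dots> \<le> (\<Sum>n. r^3 * (inverse (fact n) * r ^ n))"
  proof (rule suminf_le[OF _ snorm sb])
    fix n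
    have "fact n \<le> (fact (n+3) :: real)" by (intro fact_mono) simp
    then have "inverse (fact (n+3)) \<le> (inverse (fact n) :: real)"
      by (intro le_imp_inverse_le) auto
    then have i: "inverse (fact (n+3)) * r^(n+3) \<le> (inverse (fact n) :: real) * r^(n+3)"
      using r0 by (intro mult_right_mono) auto
    have "norm (inverse(fact (n + 3)) *\<^sub>R (x ^ (n + 3))) = inverse (fact (n+3)) * r^(n+3)"
      by (simp add: norm_power r_def)
    also have "\<dots> \<le> inverse (fact n) * r^(n+3)" by (rule i)
    also have "\<dots> = r^3 * (inverse (fact n) * r ^ n)" by (simp add: power_add)
    finally show "norm (inverse(fact (n + 3)) *\<^sub>R (x ^ (n + 3))) \<le> r^3 * (inverse (fact n) * r ^ n)" .
  qed
  also have "\<dots> = r^3 * (\<Sum>n. inverse (fact n) * r ^ n)"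
    by (rule suminf_mult) (use summable_exp_generic[of r] in simp)
  also have "(\<Sum>n. inverse (fact n) * r ^ n) = exp r"
    by (simp add: exp_def divide_inverse mult.commute)
  also have "r^3 * exp r \<le> r^3 * 3"
    using exp_le exp_mono[OF r1] r0 by (intro mult_left_mono) (auto simp del: exp_le_cancel_iff)
  finally show ?thesis by (simp add: r_def)
qed

definition small :: "nat \<Rightarrow> nat \<Rightarrow> bool" where
  "small i j \<longleftrightarrow> \<not> ((i = 1 \<and> j = 0) \<or> (i = 0 \<and> j = 1))"

definition Good :: "(nat \<Rightarrow> nat \<Rightarrow> real) \<Rightarrow> nat \<Rightarrow> real \<Rightarrow> nat \<Rightarrow> nat \<Rightarrow> bool" where
  "Good d q M i j \<longleftrightarrow> (\<forall>\<kappa> \<theta> \<theta>'. 0 < \<kappa> \<longrightarrow> \<kappa> \<le> 1 \<longrightarrow>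
     norm (gpw_coef \<kappa> d \<theta> q i j) \<le> M * \<kappa> \<and>
     (small i j \<longrightarrow> norm (gpw_coef \<kappa> d \<theta> q i j) \<le> M * \<kappa>^2 \<and>
        norm (gpw_coef \<kappa> d \<theta> q i j - gpw_coef \<kappa> d \<theta>' q i j) \<le> M * \<kappa>^3))"

lemma Good_mono: assumes "Good d q M i j" "M \<le> M'" shows "Good d q M' i j"
  unfolding Good_def
proof (intro allI impI)
  fix \<kappa> \<theta> \<theta>' :: real assume k: "0 < \<kappa>" "\<kappa> \<le> 1"
  have a: "M * \<kappa> \<le> M' * \<kappa>" "M * \<kappa>^2 \<le> M' * \<kappa>^2" "M * \<kappa>^3 \<le> M' * \<kappa>^3"
    using assms(2) k by (auto intro!: mult_right_mono)
  show "norm (gpw_coef \<kappa> d \<theta> q i j) \<le> M' * \<kappa> \<and>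
     (small i j \<longrightarrow> norm (gpw_coef \<kappa> d \<theta> q i j) \<le> M' * \<kappa>^2 \<and>
        norm (gpw_coef \<kappa> d \<theta> q i j - gpw_coef \<kappa> d \<theta>' q i j) \<le> M' * \<kappa>^3)"
    using assms(1) k a unfolding Good_def by (meson order_trans)
qed

lemma Good_zero: assumes "\<And>\<kappa> \<theta>. gpw_coef \<kappa> d \<theta> q i j = 0" "0 \<le> M" shows "Good d q M i j"
  unfolding Good_def using assms by simp

lemma Good_row0: assumes "0 \<le> d 0 0" shows "Good d q (sqrt (d 0 0)) 0 j"
  unfolding Good_def
proof (intro allI impI)
  fix \<kappa> \<theta> \<theta>' :: real assume k: "0 < \<kappa>" "\<kappa> \<le> 1"
  have nb: "norm (gpw_coef \<kappa> d \<theta> q 0 j) \<le> sqrt (d 0 0) * \<kappa>"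
  proof (cases "j = 1")
    case True
    have "norm (gpw_coef \<kappa> d \<theta> q 0 j) = \<kappa> * sqrt (d 0 0) * \<bar>sin \<theta>\<bar>"
      using True k assms by (simp add: norm_mult abs_mult)
    also have "\<dots> \<le> \<kappa> * sqrt (d 0 0) * 1" using k assms by (intro mult_left_mono) auto
    also have "\<dots> = sqrt (d 0 0) * \<kappa>" by simp
    finally show ?thesis .
  qed (use k assms in simp)
  show "norm (gpw_coef \<kappa> d \<theta> q 0 j) \<le> sqrt (d 0 0) * \<kappa> \<and>
     (small 0 j \<longrightarrow> norm (gpw_coef \<kappa> d \<theta> q 0 j) \<le> sqrt (d 0 0) * \<kappa>^2 \<and>
        norm (gpw_coef \<kappa> d \<theta> q 0 j - gpw_coef \<kappa> d \<theta>' q 0 j) \<le> sqrt (d 0 0) * \<kappa>^3)"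
  proof (intro conjI impI)
    show "norm (gpw_coef \<kappa> d \<theta> q 0 j) \<le> sqrt (d 0 0) * \<kappa>" by (rule nb)
  next
    assume sm: "small 0 j"
    have z: "gpw_coef \<kappa> d t q 0 j = 0" for t using sm by (simp add: small_def)
    show "norm (gpw_coef \<kappa> d \<theta> q 0 j) \<le> sqrt (d 0 0) * \<kappa>^2"
      "norm (gpw_coef \<kappa> d \<theta> q 0 j - gpw_coef \<kappa> d \<theta>' q 0 j) \<le> sqrt (d 0 0) * \<kappa>^3"
      using k assms sm by (simp_all add: small_def)
  qed
qed

lemma Good_row1: assumes "0 \<le> d 0 0" shows "Good d q (sqrt (d 0 0)) 1 j"
  unfolding Good_def
proof (intro allI impI)
  fix \<kappa> \<theta> \<theta>' :: real assume k: "0 < \<kappa>" "\<kappa> \<le> 1"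
  have nb: "norm (gpw_coef \<kappa> d \<theta> q 1 j) \<le> sqrt (d 0 0) * \<kappa>"
  proof (cases "j = 0")
    case True
    have "norm (gpw_coef \<kappa> d \<theta> q 1 j) = \<kappa> * sqrt (d 0 0) * \<bar>cos \<theta>\<bar>"
      using True k assms by (simp add: norm_mult abs_mult)
    also have "\<dots> \<le> \<kappa> * sqrt (d 0 0) * 1" using k assms by (intro mult_left_mono) auto
    also have "\<dots> = sqrt (d 0 0) * \<kappa>" by simp
    finally show ?thesis .
  qed (use k assms in simp)
  show "norm (gpw_coef \<kappa> d \<theta> q 1 j) \<le> sqrt (d 0 0) * \<kappa> \<and>
     (small 1 j \<longrightarrow> norm (gpw_coef \<kappa> d \<theta> q 1 j) \<le> sqrt (d 0 0) * \<kappa>^2 \<and>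
        norm (gpw_coef \<kappa> d \<theta> q 1 j - gpw_coef \<kappa> d \<theta>' q 1 j) \<le> sqrt (d 0 0) * \<kappa>^3)"
  proof (intro conjI impI)
    show "norm (gpw_coef \<kappa> d \<theta> q 1 j) \<le> sqrt (d 0 0) * \<kappa>" by (rule nb)
  next
    assume sm: "small 1 j"
    have z: "gpw_coef \<kappa> d t q 1 j = 0" for t using sm by (simp add: small_def)
    show "norm (gpw_coef \<kappa> d \<theta> q 1 j) \<le> sqrt (d 0 0) * \<kappa>^2"
      "norm (gpw_coef \<kappa> d \<theta> q 1 j - gpw_coef \<kappa> d \<theta>' q 1 j) \<le> sqrt (d 0 0) * \<kappa>^3"
      using k assms sm by (simp_all add: small_def)
  qed
qed

lemma prod_est:
  fixes a b a' b' :: complex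
  assumes k: "0 < \<kappa>" "\<kappa> \<le> 1" and M: "0 \<le> M"
    and na: "norm a \<le> M*\<kappa>" "norm a' \<le> M*\<kappa>" "norm b \<le> M*\<kappa>" "norm b' \<le> M*\<kappa>"
    and sm: "(norm a \<le> M*\<kappa>^2 \<and> norm a' \<le> M*\<kappa>^2 \<and> norm (a-a') \<le> M*\<kappa>^3) \<or>
             (norm b \<le> M*\<kappa>^2 \<and> norm b' \<le> M*\<kappa>^2 \<and> norm (b-b') \<le> M*\<kappa>^3)"
  shows "norm (a*b) \<le> M^2*\<kappa>^2" "norm (a*b - a'*b') \<le> 3*M^2*\<kappa>^3"
proof -
  have "norm (a*b) = norm a * norm b" by (simp add: norm_mult)
  also have "\<dots> \<le> (M*\<kappa>) * (M*\<kappa>)" using na M k by (intro mult_mono) auto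
  finally show "norm (a*b) \<le> M^2*\<kappa>^2" by (simp add: power2_eq_square algebra_simps)
  have k43: "\<kappa>^4 \<le> \<kappa>^3" using k by (intro power_decreasing) auto
  have e: "a*b - a'*b' = (a-a')*b + a'*(b-b')" by (simp add: algebra_simps)
  have tri: "norm (a*b - a'*b') \<le> norm (a-a') * norm b + norm a' * norm (b-b')"
    unfolding e by (metis norm_mult norm_triangle_ineq)
  have nd: "norm (a-a') \<le> 2*M*\<kappa>" "norm (b-b') \<le> 2*M*\<kappa>"
    using na norm_triangle_ineq4[of a a'] norm_triangle_ineq4[of b b'] by auto
  from sm show "norm (a*b - a'*b') \<le> 3*M^2*\<kappa>^3"
  proof
    assume h: "norm a \<le> M*\<kappa>^2 \<and> norm a' \<le> M*\<kappa>^2 \<and> norm (a-a') \<le> M*\<kappa>^3"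
    have "norm (a-a') * norm b \<le> (M*\<kappa>^3) * (M*\<kappa>)" using h na M k by (intro mult_mono) auto
    moreover have "norm a' * norm (b-b') \<le> (M*\<kappa>^2) * (2*M*\<kappa>)" using h nd M k by (intro mult_mono) auto
    moreover have "(M*\<kappa>^3) * (M*\<kappa>) = M^2 * \<kappa>^4" "(M*\<kappa>^2) * (2*M*\<kappa>) = 2*M^2*\<kappa>^3"
      by (simp_all add: power2_eq_square power3_eq_cube power4_eq_xxxx)
    moreover have "M^2 * \<kappa>^4 \<le> M^2 * \<kappa>^3" using k43 by (intro mult_left_mono) auto
    ultimately show ?thesis using tri by linarith
  next
    assume h: "norm b \<le> M*\<kappa>^2 \<and> norm b' \<le> M*\<kappa>^2 \<and> norm (b-b') \<le> M*\<kappa>^3"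
    have "norm (a-a') * norm b \<le> (2*M*\<kappa>) * (M*\<kappa>^2)" using h nd M k by (intro mult_mono) auto
    moreover have "norm a' * norm (b-b') \<le> (M*\<kappa>) * (M*\<kappa>^3)" using h na M k by (intro mult_mono) auto
    moreover have "(M*\<kappa>) * (M*\<kappa>^3) = M^2 * \<kappa>^4" "(2*M*\<kappa>) * (M*\<kappa>^2) = 2*M^2*\<kappa>^3"
      by (simp_all add: power2_eq_square power3_eq_cube power4_eq_xxxx)
    moreover have "M^2 * \<kappa>^4 \<le> M^2 * \<kappa>^3" using k43 by (intro mult_left_mono) auto
    ultimately show ?thesis using tri by linarith
  qed
qed

lemma norm_sum2_le:
  fixes f :: "'a \<Rightarrow> 'b \<Rightarrow> 'c::real_normed_vector"
  assumes "\<And>k l. k \<in> A \<Longrightarrow> l \<in> B \<Longrightarrow> norm (f k l) \<le> c"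
  shows "norm (\<Sum>k\<in>A. \<Sum>l\<in>B. f k l) \<le> real (card A) * (real (card B) * c)"
proof -
  have "norm (\<Sum>k\<in>A. \<Sum>l\<in>B. f k l) \<le> (\<Sum>k\<in>A. real (card B) * c)"
  proof (rule sum_norm_le)
    fix k assume k: "k \<in> A"
    have "norm (\<Sum>l\<in>B. f k l) \<le> (\<Sum>l\<in>B. c)" by (rule sum_norm_le) (use assms k in auto)
    then show "norm (\<Sum>l\<in>B. f k l) \<le> real (card B) * c" by simp
  qed
  then show ?thesis by simp
qed

lemma norm_sum2_diff:
  fixes f g :: "'a \<Rightarrow> 'b \<Rightarrow> 'c::real_normed_vector"
  assumes "\<And>k l. k \<in> A \<Longrightarrow> l \<in> B \<Longrightarrow> norm (f k l - g k l) \<le> c"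
  shows "norm ((\<Sum>k\<in>A. \<Sum>l\<in>B. f k l) - (\<Sum>k\<in>A. \<Sum>l\<in>B. g k l)) \<le> real (card A) * (real (card B) * c)"
proof -
  have "(\<Sum>k\<in>A. \<Sum>l\<in>B. f k l) - (\<Sum>k\<in>A. \<Sum>l\<in>B. g k l) = (\<Sum>k\<in>A. \<Sum>l\<in>B. f k l - g k l)"
    by (simp add: sum_subtractf)
  then show ?thesis using norm_sum2_le[of A B "\<lambda>k l. f k l - g k l" c] assms by simp
qed

lemma term_est:
  assumes G1: "Good d q M a1 b1" and G2: "Good d q M a2 b2" and sm: "small a1 b1 \<or> small a2 b2"
    and k: "0 < \<kappa>" "\<kappa> \<le> 1" and M: "0 \<le> M" and w: "w \<le> W"
  shows "norm (of_nat w * gpw_coef \<kappa> d \<theta> q a1 b1 * gpw_coef \<kappa> d \<theta> q a2 b2) \<le> real W * (M^2*\<kappa>^2)"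
    and "norm (of_nat w * gpw_coef \<kappa> d \<theta> q a1 b1 * gpw_coef \<kappa> d \<theta> q a2 b2
             - of_nat w * gpw_coef \<kappa> d \<theta>' q a1 b1 * gpw_coef \<kappa> d \<theta>' q a2 b2) \<le> real W * (3*M^2*\<kappa>^3)"
proof -
  define a where "a = gpw_coef \<kappa> d \<theta> q a1 b1"
  define a' where "a' = gpw_coef \<kappa> d \<theta>' q a1 b1"
  define b where "b = gpw_coef \<kappa> d \<theta> q a2 b2"
  define b' where "b' = gpw_coef \<kappa> d \<theta>' q a2 b2"
  have g1: "norm a \<le> M*\<kappa>" "norm a' \<le> M*\<kappa>"
    using G1 k unfolding Good_def a_def a'_def by blast+
  have g2: "norm b \<le> M*\<kappa>" "norm b' \<le> M*\<kappa>"
    using G2 k unfolding Good_def b_def b'_def by blast+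
  have s: "(norm a \<le> M*\<kappa>^2 \<and> norm a' \<le> M*\<kappa>^2 \<and> norm (a-a') \<le> M*\<kappa>^3) \<or>
             (norm b \<le> M*\<kappa>^2 \<and> norm b' \<le> M*\<kappa>^2 \<and> norm (b-b') \<le> M*\<kappa>^3)"
    using sm G1 G2 k unfolding Good_def a_def a'_def b_def b'_def by blast
  note P = prod_est[OF k M g1 g2 s]
  have W: "real w \<le> real W" using w by simp
  have "norm (of_nat w * a * b) = real w * norm (a * b)" by (simp add: norm_mult mult.assoc)
  also have "\<dots> \<le> real W * (M^2*\<kappa>^2)" using P(1) W by (intro mult_mono) auto
  finally show "norm (of_nat w * gpw_coef \<kappa> d \<theta> q a1 b1 * gpw_coef \<kappa> d \<theta> q a2 b2) \<le> real W * (M^2*\<kappa>^2)"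
    by (simp add: a_def b_def)
  have "norm (of_nat w * a * b - of_nat w * a' * b') = real w * norm (a * b - a' * b')"
    by (simp add: norm_mult mult.assoc flip: right_diff_distrib)
  also have "\<dots> \<le> real W * (3*M^2*\<kappa>^3)" using P(2) W by (intro mult_mono) auto
  finally show "norm (of_nat w * gpw_coef \<kappa> d \<theta> q a1 b1 * gpw_coef \<kappa> d \<theta> q a2 b2
             - of_nat w * gpw_coef \<kappa> d \<theta>' q a1 b1 * gpw_coef \<kappa> d \<theta>' q a2 b2) \<le> real W * (3*M^2*\<kappa>^3)"
    by (simp add: a_def b_def a'_def b'_def)
qed

lemma card_mult_le: "a \<le> N1 \<Longrightarrow> b \<le> N1 \<Longrightarrow> 0 \<le> c \<Longrightarrow> real a * (real b * c) \<le> real N1 * (real N1 * c)"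
  by (intro mult_mono) (auto intro: mult_right_mono)

lemma aux20: fixes k c s r D :: complex
  assumes "r * r = D" "c * c + s * s = 1"
  shows "k * (k * (c * (c * (r * r)))) + k * (k * (s * (s * (r * r)))) = k * (k * D)"
proof -
  have "k * (k * (c * (c * (r * r)))) + k * (k * (s * (s * (r * r)))) = k * (k * ((c * c + s * s) * (r * r)))"
    by (simp add: algebra_simps)
  then show ?thesis using assms by simp
qed

lemma coef20:
  assumes "0 \<le> d 0 0" "2 \<le> q + 1"
  shows "gpw_coef \<kappa> d \<theta> q 2 0 = 0"
proof -
  have h1: "complex_of_real (sqrt (d 0 0)) * complex_of_real (sqrt (d 0 0)) = complex_of_real (d 0 0)"
    using assms by (simp flip: of_real_mult)
  have h2: "complex_of_real (cos \<theta>) * complex_of_real (cos \<theta>) + complex_of_real (sin \<theta>) * complex_of_real (sin \<theta>) = 1"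
  proof -
    have r: "cos \<theta> * cos \<theta> + sin \<theta> * sin \<theta> = 1" using sin_cos_squared_add[of \<theta>] by (simp add: power2_eq_square)
    show ?thesis using arg_cong[OF r, of complex_of_real] by (simp only: of_real_add of_real_mult of_real_1)
  qed
  show ?thesis
    using assms(2) by (simp add: numeral_2_eq_2 power2_eq_square algebra_simps) (rule aux20[OF h1 h2])
qed

lemma tri4: fixes a b c d :: "'a::real_normed_vector"
  shows "norm (- a - b - c - d) \<le> norm a + norm b + norm c + norm d"
proof -
  have "norm (- a - b - c - d) = norm (a + b + c + d)" by (metis minus_diff_eq norm_minus_cancel diff_minus_eq_add uminus_add_conv_diff add.assoc diff_diff_eq)
  also have "\<dots> \<le> norm (a + b + c) + norm d" by (rule norm_triangle_ineq)
  also have "norm (a + b + c) \<le> norm (a + b) + norm c" by (rule norm_triangle_ineq)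
  also have "norm (a + b) \<le> norm a + norm b" by (rule norm_triangle_ineq)
  finally show ?thesis by simp
qed

lemma step_good:
  assumes d00: "0 \<le> d 0 0" and M0: "0 \<le> M" and IH: "\<forall>i'\<le>Suc i. \<forall>j. Good d q M i' j"
  shows "\<exists>M'\<ge>0. \<forall>j. Good d q M' (Suc (Suc i)) j"
proof -
  define N where "N = q + 1"
  define Dd where "Dd = (\<Sum>a\<le>N. \<Sum>b\<le>N. \<bar>d a b\<bar>)"
  define M' where "M' = Dd + real ((N+2)^2) * M + 6 * real ((N+1)^4) * M^2"
  have Dd0: "0 \<le> Dd" unfolding Dd_def by (intro sum_nonneg) auto
  have M'0: "0 \<le> M'" unfolding M'_def using Dd0 M0 by simp
  have Dd_ge: "\<bar>d a b\<bar> \<le> Dd" if "a \<le> N" "b \<le> N" for a b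
  proof -
    have "\<bar>d a b\<bar> \<le> (\<Sum>b\<le>N. \<bar>d a b\<bar>)" using that by (intro member_le_sum) auto
    also have "\<dots> \<le> Dd" unfolding Dd_def using that by (intro member_le_sum[of a "{..N}" "\<lambda>a. \<Sum>b\<le>N. \<bar>d a b\<bar>"]) (auto intro: sum_nonneg)
    finally show ?thesis .
  qed
  show ?thesis
  proof (intro exI conjI allI)
    show "0 \<le> M'" by (fact M'0)
    fix j
    show "Good d q M' (Suc (Suc i)) j"
    proof (cases "q + 1 < i + j + 2")
      case True
      then show ?thesis by (intro Good_zero M'0) simp
    next
      case False
      show ?thesis
      proof (cases "i = 0 \<and> j = 0")
        case True
        then show ?thesis using False coef20[of d q, OF d00] by (intro Good_zero M'0) (simp add: numeral_2_eq_2)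
      next
        case nz: False
        have iN: "i \<le> N" and jN: "j \<le> N" using False by (auto simp: N_def)
        show ?thesis unfolding Good_def
        proof (intro allI impI)
          fix \<kappa> \<theta> \<theta>' :: real assume k: "0 < \<kappa>" "\<kappa> \<le> 1"
          define L where "L t a b = gpw_coef \<kappa> d t q a b" for t a b
          define A where "A = (of_real (\<kappa>^2 * d i j / (fact i * fact j)) :: complex)"
          define B where "B t = of_nat ((j + 2) * (j + 1)) * L t i (j + 2)" for t
          define S1 where "S1 t = (\<Sum>k\<in>{0..i}. \<Sum>l\<in>{0..j}. of_nat ((i - k + 1) * (k + 1)) *
               L t (i - k + 1) (j - l) * L t (k + 1) l)" for t
          define S2 where "S2 t = (\<Sum>k\<in>{0..j}. \<Sum>l\<in>{0..i}. of_nat ((j - k + 1) * (k + 1)) *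
               L t (i - l) (j - k + 1) * L t l (k + 1))" for t
          define f where "f = (1 / of_nat ((i + 2) * (i + 1)) :: complex)"
          have eq: "L t (Suc (Suc i)) j = f * (- A - B t - S1 t - S2 t)" for t
            using False unfolding L_def A_def B_def S1_def S2_def f_def by simp
          have nf: "norm f \<le> 1"
          proof -
            have "norm f = 1 / real ((i + 2) * (i + 1))" unfolding f_def by (simp only: norm_divide norm_one norm_of_nat)
            also have "\<dots> \<le> 1" by (simp add: divide_le_eq)
            finally show ?thesis .
          qed
          have kk: "\<kappa>^3 \<le> \<kappa>^2" "\<kappa>^2 \<le> \<kappa>" using k by (auto intro: power_decreasing[of 1 2 \<kappa>, simplified] power_decreasing)
          have hA: "norm A \<le> Dd * \<kappa>^2"
          proof -
            have "norm A = \<kappa>^2 * (\<bar>d i j\<bar> / (fact i * fact j))" unfolding A_def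
              by (simp only: norm_of_real) (simp add: abs_mult)
            also have "\<bar>d i j\<bar> / (fact i * fact j) \<le> \<bar>d i j\<bar>"
            proof -
              have f1: "(1::real) * 1 \<le> fact i * fact j" by (intro mult_mono) auto
              have "\<bar>d i j\<bar> * 1 \<le> \<bar>d i j\<bar> * (fact i * fact j)" using f1 by (intro mult_left_mono) auto
              then show ?thesis using f1 by (simp add: divide_le_eq)
            qed
            also have "\<bar>d i j\<bar> \<le> Dd" using Dd_ge iN jN by auto
            finally show ?thesis using k by (simp add: mult.commute mult_left_mono)
          qed
          have Gi: "Good d q M i (j+2)" using IH by simp
          have smi: "small i (j+2)" by (simp add: small_def)
          have wB: "real ((j + 2) * (j + 1)) \<le> real ((N+2)^2)"
            using jN by (simp only: of_nat_le_iff power2_eq_square) (intro mult_le_mono; simp)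
          have hB: "norm (B t) \<le> real ((N+2)^2) * (M*\<kappa>^2)" for t
          proof -
            have "norm (L t i (j+2)) \<le> M*\<kappa>^2" using Gi smi k unfolding Good_def L_def by blast
            then show ?thesis unfolding B_def norm_mult norm_of_nat using wB M0 by (intro mult_mono) auto
          qed
          have hBd: "norm (B \<theta> - B \<theta>') \<le> real ((N+2)^2) * (M*\<kappa>^3)"
          proof -
            have n: "norm (L \<theta> i (j+2) - L \<theta>' i (j+2)) \<le> M*\<kappa>^3" using Gi smi k unfolding Good_def L_def by blast
            have e: "B \<theta> - B \<theta>' = of_nat ((j + 2) * (j + 1)) * (L \<theta> i (j+2) - L \<theta>' i (j+2))"
              unfolding B_def by (simp add: algebra_simps)
            show ?thesis unfolding e norm_mult norm_of_nat using n wB M0 by (intro mult_mono) auto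
          qed
          have cardi: "card {0..i} \<le> N+1" "card {0..j} \<le> N+1" using iN jN by auto
          have W4: "real (N+1) * (real (N+1) * (real ((N+1)^2) * c)) = real ((N+1)^4) * c" for c
            by (simp only: of_nat_power) (simp add: power2_eq_square power4_eq_xxxx mult.assoc)
          have terms1: "norm (of_nat ((i - k + 1) * (k + 1)) * L t (i - k + 1) (j - l) * L t (k + 1) l) \<le> real ((N+1)^2) * (M^2*\<kappa>^2)
             \<and> norm (of_nat ((i - k + 1) * (k + 1)) * L \<theta> (i - k + 1) (j - l) * L \<theta> (k + 1) l
                 - of_nat ((i - k + 1) * (k + 1)) * L \<theta>' (i - k + 1) (j - l) * L \<theta>' (k + 1) l) \<le> real ((N+1)^2) * (3*M^2*\<kappa>^3)"
            if kl: "k \<in> {0..i}" "l \<in> {0..j}" for k l t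
          proof -
            have G1: "Good d q M (i - k + 1) (j - l)" using IH kl by auto
            have G2: "Good d q M (k + 1) l" using IH kl by auto
            have sm: "small (i - k + 1) (j - l) \<or> small (k + 1) l" using kl nz unfolding small_def by auto
            have w: "(i - k + 1) * (k + 1) \<le> (N+1)^2" unfolding power2_eq_square using kl iN by (intro mult_le_mono) auto
            show ?thesis unfolding L_def using term_est[OF G1 G2 sm k M0 w] by blast
          qed
          have terms2: "norm (of_nat ((j - k + 1) * (k + 1)) * L t (i - l) (j - k + 1) * L t l (k + 1)) \<le> real ((N+1)^2) * (M^2*\<kappa>^2)
             \<and> norm (of_nat ((j - k + 1) * (k + 1)) * L \<theta> (i - l) (j - k + 1) * L \<theta> l (k + 1)
                 - of_nat ((j - k + 1) * (k + 1)) * L \<theta>' (i - l) (j - k + 1) * L \<theta>' l (k + 1)) \<le> real ((N+1)^2) * (3*M^2*\<kappa>^3)"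
            if kl: "k \<in> {0..j}" "l \<in> {0..i}" for k l t
          proof -
            have G1: "Good d q M (i - l) (j - k + 1)" using IH kl by auto
            have G2: "Good d q M l (k + 1)" using IH kl by auto
            have sm: "small (i - l) (j - k + 1) \<or> small l (k + 1)" using kl nz unfolding small_def by auto
            have w: "(j - k + 1) * (k + 1) \<le> (N+1)^2" unfolding power2_eq_square using kl jN by (intro mult_le_mono) auto
            show ?thesis unfolding L_def using term_est[OF G1 G2 sm k M0 w] by blast
          qed
          have c0: "0 \<le> real ((N+1)^2) * (M^2*\<kappa>^2)" "0 \<le> real ((N+1)^2) * (3*M^2*\<kappa>^3)" using k by auto
          have hS1: "norm (S1 t) \<le> real ((N+1)^4) * (M^2*\<kappa>^2)" for t
          proof -
            have "norm (S1 t) \<le> real (card {0..i}) * (real (card {0..j}) * (real ((N+1)^2) * (M^2*\<kappa>^2)))"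
              unfolding S1_def by (rule norm_sum2_le) (use terms1 in blast)
            also have "\<dots> \<le> real (N+1) * (real (N+1) * (real ((N+1)^2) * (M^2*\<kappa>^2)))"
              by (rule card_mult_le[OF cardi c0(1)])
            finally show ?thesis unfolding W4 .
          qed
          have hS1d: "norm (S1 \<theta> - S1 \<theta>') \<le> real ((N+1)^4) * (3*M^2*\<kappa>^3)"
          proof -
            have "norm (S1 \<theta> - S1 \<theta>') \<le> real (card {0..i}) * (real (card {0..j}) * (real ((N+1)^2) * (3*M^2*\<kappa>^3)))"
              unfolding S1_def by (rule norm_sum2_diff) (use terms1 in blast)
            also have "\<dots> \<le> real (N+1) * (real (N+1) * (real ((N+1)^2) * (3*M^2*\<kappa>^3)))"
              by (rule card_mult_le[OF cardi c0(2)])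
            finally show ?thesis unfolding W4 .
          qed
          have hS2: "norm (S2 t) \<le> real ((N+1)^4) * (M^2*\<kappa>^2)" for t
          proof -
            have "norm (S2 t) \<le> real (card {0..j}) * (real (card {0..i}) * (real ((N+1)^2) * (M^2*\<kappa>^2)))"
              unfolding S2_def by (rule norm_sum2_le) (use terms2 in blast)
            also have "\<dots> \<le> real (N+1) * (real (N+1) * (real ((N+1)^2) * (M^2*\<kappa>^2)))"
              by (rule card_mult_le[OF cardi(2) cardi(1) c0(1)])
            finally show ?thesis unfolding W4 .
          qed
          have hS2d: "norm (S2 \<theta> - S2 \<theta>') \<le> real ((N+1)^4) * (3*M^2*\<kappa>^3)"
          proof -
            have "norm (S2 \<theta> - S2 \<theta>') \<le> real (card {0..j}) * (real (card {0..i}) * (real ((N+1)^2) * (3*M^2*\<kappa>^3)))"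
              unfolding S2_def by (rule norm_sum2_diff) (use terms2 in blast)
            also have "\<dots> \<le> real (N+1) * (real (N+1) * (real ((N+1)^2) * (3*M^2*\<kappa>^3)))"
              by (rule card_mult_le[OF cardi(2) cardi(1) c0(2)])
            finally show ?thesis unfolding W4 .
          qed
          have main: "norm (L \<theta> (Suc (Suc i)) j) \<le> M' * \<kappa>^2"
          proof -
            have "norm (L \<theta> (Suc (Suc i)) j) = norm f * norm (- A - B \<theta> - S1 \<theta> - S2 \<theta>)"
              by (simp add: eq norm_mult)
            also have "\<dots> \<le> 1 * norm (- A - B \<theta> - S1 \<theta> - S2 \<theta>)" by (intro mult_right_mono nf) simp
            also have "\<dots> \<le> norm A + norm (B \<theta>) + norm (S1 \<theta>) + norm (S2 \<theta>)" unfolding mult_1_left by (rule tri4)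
            also have "\<dots> \<le> Dd * \<kappa>^2 + real ((N+2)^2) * (M*\<kappa>^2) + real ((N+1)^4) * (M^2*\<kappa>^2) + real ((N+1)^4) * (M^2*\<kappa>^2)"
              using hA hB[of \<theta>] hS1[of \<theta>] hS2[of \<theta>] by linarith
            also have "\<dots> \<le> M' * \<kappa>^2" unfolding M'_def using M0 k by (simp add: algebra_simps)
            finally show ?thesis .
          qed
          have maind: "norm (L \<theta> (Suc (Suc i)) j - L \<theta>' (Suc (Suc i)) j) \<le> M' * \<kappa>^3"
          proof -
            have "L \<theta> (Suc (Suc i)) j - L \<theta>' (Suc (Suc i)) j = f * (- 0 - (B \<theta> - B \<theta>') - (S1 \<theta> - S1 \<theta>') - (S2 \<theta> - S2 \<theta>'))"
              unfolding eq by (simp add: algebra_simps)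
            then have "norm (L \<theta> (Suc (Suc i)) j - L \<theta>' (Suc (Suc i)) j) = norm f * norm (- 0 - (B \<theta> - B \<theta>') - (S1 \<theta> - S1 \<theta>') - (S2 \<theta> - S2 \<theta>'))"
              by (simp only: norm_mult)
            also have "\<dots> \<le> 1 * norm (- 0 - (B \<theta> - B \<theta>') - (S1 \<theta> - S1 \<theta>') - (S2 \<theta> - S2 \<theta>'))" by (intro mult_right_mono nf) simp
            also have "\<dots> \<le> norm (0::complex) + norm (B \<theta> - B \<theta>') + norm (S1 \<theta> - S1 \<theta>') + norm (S2 \<theta> - S2 \<theta>')" unfolding mult_1_left by (rule tri4)
            also have "\<dots> \<le> 0 + real ((N+2)^2) * (M*\<kappa>^3) + real ((N+1)^4) * (3*M^2*\<kappa>^3) + real ((N+1)^4) * (3*M^2*\<kappa>^3)"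
              using hBd hS1d hS2d by (simp only: norm_zero)
            also have "\<dots> \<le> M' * \<kappa>^3" unfolding M'_def using M0 k Dd0 by (simp add: algebra_simps)
            finally show ?thesis .
          qed
          have "M' * \<kappa>^2 \<le> M' * \<kappa>" using kk M'0 by (intro mult_left_mono) auto
          then show "norm (gpw_coef \<kappa> d \<theta> q (Suc (Suc i)) j) \<le> M' * \<kappa> \<and>
             (small (Suc (Suc i)) j \<longrightarrow> norm (gpw_coef \<kappa> d \<theta> q (Suc (Suc i)) j) \<le> M' * \<kappa>^2 \<and>
              norm (gpw_coef \<kappa> d \<theta> q (Suc (Suc i)) j - gpw_coef \<kappa> d \<theta>' q (Suc (Suc i)) j) \<le> M' * \<kappa>^3)"
            using main maind unfolding L_def by auto
        qed
      qed
    qed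
  qed
qed

lemma rows_good: assumes d00: "0 \<le> d 0 0" shows "\<exists>M\<ge>0. \<forall>i\<le>m. \<forall>j. Good d q M i j"
proof (induction m)
  case 0
  then show ?case using Good_row0[of d, OF d00] by (intro exI[of _ "sqrt (d 0 0)"]) (auto simp: d00)
next
  case (Suc m)
  then obtain M where M: "0 \<le> M" "\<forall>i\<le>m. \<forall>j. Good d q M i j" by blast
  show ?case
  proof (cases m)
    case 0
    show ?thesis
    proof (intro exI[of _ "M + sqrt (d 0 0)"] conjI allI impI)
      show "0 \<le> M + sqrt (d 0 0)" using M d00 by simp
      fix i j assume "i \<le> Suc m"
      then have "i = 0 \<or> i = 1" using 0 by auto
      moreover have "Good d q (M + sqrt (d 0 0)) 0 j"
        by (rule Good_mono[OF Good_row0[of d, OF d00]]) (use M in simp)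
      moreover have "Good d q (M + sqrt (d 0 0)) 1 j"
        by (rule Good_mono[OF Good_row1[of d, OF d00]]) (use M in simp)
      ultimately show "Good d q (M + sqrt (d 0 0)) i j" by auto
    qed
  next
    case (Suc i0)
    then obtain M' where M': "0 \<le> M'" "\<forall>j. Good d q M' (Suc (Suc i0)) j"
      using step_good[of d, OF d00 M(1)] M(2) by blast
    show ?thesis
    proof (intro exI[of _ "M + M'"] conjI allI impI)
      show "0 \<le> M + M'" using M M' by simp
      fix i j assume i: "i \<le> Suc m"
      show "Good d q (M + M') i j"
      proof (cases "i \<le> m")
        case True then show ?thesis using M M' by - (rule Good_mono[of d q M], auto)
      next
        case False then have "i = Suc (Suc i0)" using i Suc by auto
        then show ?thesis using M M' by - (rule Good_mono[of d q M'], auto)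
      qed
    qed
  qed
qed

lemma all_good: assumes d00: "0 \<le> d 0 0" shows "\<exists>M\<ge>0. \<forall>i j. Good d q M i j"
proof -
  obtain M where M: "0 \<le> M" "\<forall>i\<le>q+1. \<forall>j. Good d q M i j" using rows_good[of d, OF d00] by blast
  have "Good d q M i j" for i j
  proof (cases "i \<le> q + 1")
    case True then show ?thesis using M by auto
  next
    case False
    define i' where "i' = i - 2"
    have "i = Suc (Suc i')" using False unfolding i'_def by arith
    then show ?thesis using False M(1) by (intro Good_zero) auto
  qed
  then show ?thesis using M(1) by blast
qed

definition Sset :: "nat \<Rightarrow> (nat \<times> nat) set" where "Sset q = {(i, j). i + j \<le> q + 1}"

lemma finite_Sset: "finite (Sset q)"
proof -
  have "Sset q \<subseteq> {..q+1} \<times> {..q+1}" unfolding Sset_def by auto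
  then show ?thesis by (rule finite_subset) auto
qed

definition Hf :: "real \<Rightarrow> (nat \<Rightarrow> nat \<Rightarrow> real) \<Rightarrow> real \<Rightarrow> nat \<Rightarrow> real \<times> real \<Rightarrow> complex" where
  "Hf \<kappa> d \<theta> q z = (\<Sum>(i, j)\<in>Sset q. (if small i j then gpw_coef \<kappa> d \<theta> q i j else 0) *
      of_real ((fst z - 1/2) ^ i * (snd z - 1/2) ^ j))"

lemma gpw_decomp:
  "gpw \<kappa> d \<theta> q centroid_Khat z = exp (\<i> * of_real (\<kappa> * sqrt (d 0 0) * (cos \<theta> * (fst z - 1/2) + sin \<theta> * (snd z - 1/2))) + Hf \<kappa> d \<theta> q z)"
proof -
  define g where "g = (\<lambda>(i, j). gpw_coef \<kappa> d \<theta> q i j * of_real ((fst z - 1/2) ^ i * (snd z - 1/2) ^ j) :: complex)"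
  have "(\<Sum>(i, j)\<in>Sset q. gpw_coef \<kappa> d \<theta> q i j * of_real ((fst z - 1/2) ^ i * (snd z - 1/2) ^ j)) = sum g (Sset q)"
    unfolding g_def ..
  also have "\<dots> = (\<Sum>x\<in>Sset q. (if small (fst x) (snd x) then g x else 0)) + (\<Sum>x\<in>Sset q. (if small (fst x) (snd x) then 0 else g x))"
    by (subst sum.distrib[symmetric]) (rule sum.cong; simp)
  also have "(\<Sum>x\<in>Sset q. (if small (fst x) (snd x) then g x else 0)) = Hf \<kappa> d \<theta> q z"
    unfolding Hf_def g_def by (intro sum.cong) auto
  also have "(\<Sum>x\<in>Sset q. (if small (fst x) (snd x) then 0 else g x)) = (\<Sum>x\<in>{(1,0),(0,1)}. g x)"
  proof -
    have "(\<Sum>x\<in>Sset q. (if small (fst x) (snd x) then 0 else g x)) = (\<Sum>x\<in>Sset q. (if \<not> small (fst x) (snd x) then g x else 0))"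
      by (rule sum.cong) auto
    also have "\<dots> = sum g {x\<in>Sset q. \<not> small (fst x) (snd x)}"
      by (rule sum.inter_filter[symmetric]) (rule finite_Sset)
    also have "{x\<in>Sset q. \<not> small (fst x) (snd x)} = {(1,0),(0,1)}" unfolding Sset_def small_def by auto
    finally show ?thesis .
  qed
  also have "(\<Sum>x\<in>{(1::nat,0::nat),(0,1)}. g x) = \<i> * of_real (\<kappa> * sqrt (d 0 0) * (cos \<theta> * (fst z - 1/2) + sin \<theta> * (snd z - 1/2)))"
    unfolding g_def by (simp add: algebra_simps)
  finally show ?thesis unfolding gpw_def centroid_Khat_def by (simp add: add.commute Sset_def)
qed

lemma mono_le1: assumes "\<bar>X\<bar> \<le> 1/2" "\<bar>Y\<bar> \<le> 1/2" shows "\<bar>X ^ i * Y ^ j :: real\<bar> \<le> 1"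
proof -
  have "\<bar>X\<bar> ^ i \<le> 1" "\<bar>Y\<bar> ^ j \<le> 1" using assms by (auto intro!: power_le_one)
  then show ?thesis by (simp add: abs_mult power_abs mult_le_one)
qed

lemma Hf_bounds:
  assumes G: "\<forall>i j. Good d q M i j" and M: "0 \<le> M" and k: "0 < \<kappa>" "\<kappa> \<le> 1"
    and z: "\<bar>fst z - 1/2\<bar> \<le> 1/2" "\<bar>snd z - 1/2\<bar> \<le> 1/2"
  shows "norm (Hf \<kappa> d \<theta> q z) \<le> real (card (Sset q)) * (M * \<kappa>^2)"
    and "norm (Hf \<kappa> d \<theta> q z - Hf \<kappa> d \<theta>' q z) \<le> real (card (Sset q)) * (M * \<kappa>^3)"
proof -
  define m where "m x = complex_of_real ((fst z - 1/2) ^ fst x * (snd z - 1/2) ^ snd x)" for x :: "nat \<times> nat"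
  define h where "h t x = (if small (fst x) (snd x) then gpw_coef \<kappa> d t q (fst x) (snd x) else 0)" for t x
  have Hf_alt: "Hf \<kappa> d t q z = (\<Sum>x\<in>Sset q. h t x * m x)" for t
    unfolding Hf_def h_def m_def by (intro sum.cong) auto
  have nm: "norm (m x) \<le> 1" for x unfolding m_def norm_of_real using mono_le1[OF z] .
  have hb: "norm (h t x) \<le> M * \<kappa>^2" "norm (h \<theta> x - h \<theta>' x) \<le> M * \<kappa>^3" for t x
    using G k M unfolding h_def Good_def by auto
  have "norm (Hf \<kappa> d \<theta> q z) \<le> (\<Sum>x\<in>Sset q. M * \<kappa>^2)"
    unfolding Hf_alt
  proof (rule sum_norm_le)
    fix x show "norm (h \<theta> x * m x) \<le> M * \<kappa>^2"
      unfolding norm_mult using hb(1)[of \<theta> x] nm[of x] by (metis mult_left_le norm_ge_zero order_trans mult.commute mult_left_mono)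
  qed
  then show "norm (Hf \<kappa> d \<theta> q z) \<le> real (card (Sset q)) * (M * \<kappa>^2)" by simp
  have "Hf \<kappa> d \<theta> q z - Hf \<kappa> d \<theta>' q z = (\<Sum>x\<in>Sset q. (h \<theta> x - h \<theta>' x) * m x)"
    unfolding Hf_alt by (simp add: sum_subtractf left_diff_distrib)
  also have "norm \<dots> \<le> (\<Sum>x\<in>Sset q. M * \<kappa>^3)"
  proof (rule sum_norm_le)
    fix x show "norm ((h \<theta> x - h \<theta>' x) * m x) \<le> M * \<kappa>^3"
      unfolding norm_mult using hb(2)[of x] nm[of x] by (metis mult_left_le norm_ge_zero order_trans mult.commute mult_left_mono)
  qed
  finally show "norm (Hf \<kappa> d \<theta> q z - Hf \<kappa> d \<theta>' q z) \<le> real (card (Sset q)) * (M * \<kappa>^3)" by simp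
qed

lemma real_sums:
  assumes p: "3 < p"
  shows "(\<Sum>l\<in>{1..p}. cos (th p l) * X + sin (th p l) * Y) = 0"
    "(\<Sum>l\<in>{1..p}. \<beta> * cos (th p l) + \<gamma> * sin (th p l)) = 0"
    "(\<Sum>l\<in>{1..p}. (\<beta> * cos (th p l) + \<gamma> * sin (th p l)) * (cos (th p l) * X + sin (th p l) * Y)) = real p / 2 * (\<beta> * X + \<gamma> * Y)"
    "(\<Sum>l\<in>{1..p}. (\<beta> * cos (th p l) + \<gamma> * sin (th p l)) * (cos (th p l) * X + sin (th p l) * Y)^2) = 0"
proof -
  note T = trig_sums[OF p]
  show "(\<Sum>l\<in>{1..p}. cos (th p l) * X + sin (th p l) * Y) = 0"
    using T by (simp add: sum.distrib sum_distrib_right[symmetric])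
  show "(\<Sum>l\<in>{1..p}. \<beta> * cos (th p l) + \<gamma> * sin (th p l)) = 0"
    using T by (simp add: sum.distrib sum_distrib_left[symmetric])
  have "(\<Sum>l\<in>{1..p}. (\<beta> * cos (th p l) + \<gamma> * sin (th p l)) * (cos (th p l) * X + sin (th p l) * Y))
     = (\<Sum>l\<in>{1..p}. (\<beta>*X) * cos (th p l)^2 + (\<beta>*Y + \<gamma>*X) * (cos (th p l) * sin (th p l)) + (\<gamma>*Y) * sin (th p l)^2)"
    by (intro sum.cong) (auto simp: power2_eq_square algebra_simps)
  also have "\<dots> = (\<beta>*X) * (\<Sum>l\<in>{1..p}. cos (th p l)^2) + (\<beta>*Y + \<gamma>*X) * (\<Sum>l\<in>{1..p}. cos (th p l) * sin (th p l)) + (\<gamma>*Y) * (\<Sum>l\<in>{1..p}. sin (th p l)^2)"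
    by (simp add: sum.distrib sum_distrib_left)
  also have "\<dots> = real p / 2 * (\<beta> * X + \<gamma> * Y)" by (simp only: T(3) T(4) T(5)) (simp add: algebra_simps)
  finally show "(\<Sum>l\<in>{1..p}. (\<beta> * cos (th p l) + \<gamma> * sin (th p l)) * (cos (th p l) * X + sin (th p l) * Y)) = real p / 2 * (\<beta> * X + \<gamma> * Y)" .
  have "(\<Sum>l\<in>{1..p}. (\<beta> * cos (th p l) + \<gamma> * sin (th p l)) * (cos (th p l) * X + sin (th p l) * Y)^2)
     = (\<Sum>l\<in>{1..p}. (\<beta>*X^2) * cos (th p l)^3 + (2*\<beta>*X*Y + \<gamma>*X^2) * (cos (th p l)^2 * sin (th p l))
          + (\<beta>*Y^2 + 2*\<gamma>*X*Y) * (cos (th p l) * sin (th p l)^2) + (\<gamma>*Y^2) * sin (th p l)^3)"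
    by (intro sum.cong) (auto simp: power2_eq_square power3_eq_cube algebra_simps)
  also have "\<dots> = (\<beta>*X^2) * (\<Sum>l\<in>{1..p}. cos (th p l)^3) + (2*\<beta>*X*Y + \<gamma>*X^2) * (\<Sum>l\<in>{1..p}. cos (th p l)^2 * sin (th p l))
          + (\<beta>*Y^2 + 2*\<gamma>*X*Y) * (\<Sum>l\<in>{1..p}. cos (th p l) * sin (th p l)^2) + (\<gamma>*Y^2) * (\<Sum>l\<in>{1..p}. sin (th p l)^3)"
    by (simp add: sum.distrib sum_distrib_left)
  also have "\<dots> = 0" using T by simp
  finally show "(\<Sum>l\<in>{1..p}. (\<beta> * cos (th p l) + \<gamma> * sin (th p l)) * (cos (th p l) * X + sin (th p l) * Y)^2) = 0" .
qed

lemma ring_aux: fixes A P a0 Ki KV V SQ B1 B2 :: complex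
  assumes "A * P = a0" "Ki * KV = V"
  shows "(a0 + V) - (A * (P + SQ) + Ki * (KV + B1 + B2)) = - (A * SQ) - Ki * (B1 + B2)"
proof -
  have "(a0 + V) - (A * (P + SQ) + Ki * (KV + B1 + B2)) = (a0 - A * P) + (V - Ki * KV) - A * SQ - Ki * (B1 + B2)"
    by (simp add: algebra_simps)
  then show ?thesis using assms by simp
qed

lemma approx_point:
  assumes d00: "0 < d 0 0" and p: "3 < p"
  shows "\<exists>K \<kappa>0. 0 < \<kappa>0 \<and> \<kappa>0 \<le> 1 \<and> 0 \<le> K \<and> (\<forall>\<kappa> \<alpha> \<beta> \<gamma>. 0 < \<kappa> \<longrightarrow> \<kappa> \<le> \<kappa>0 \<longrightarrow> (\<exists>a. \<forall>z\<in>Khat.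
     norm (complex_of_real (\<alpha> + \<beta> * (fst z - 1/2) + \<gamma> * (snd z - 1/2)) -
        (\<Sum>l\<in>{1..p}. a l * gpw \<kappa> d (th p l) q centroid_Khat z)) \<le> K * \<kappa>^2 * (\<bar>\<alpha>\<bar> + \<bar>\<beta>\<bar> + \<bar>\<gamma>\<bar>)))"
proof -
  obtain M where M: "0 \<le> M" "\<forall>i j. Good d q M i j" using all_good[of d q] d00 by auto
  define M1 where "M1 = real (card (Sset q)) * M"
  define s where "s = sqrt (d 0 0)"
  have s0: "0 < s" unfolding s_def using d00 by simp
  have M10: "0 \<le> M1" unfolding M1_def using M by simp
  define \<kappa>0 where "\<kappa>0 = 1 / (s + M1 + 1)"
  define KR where "KR = 3 * (s + M1)^3 + s * M1 + M1^2"
  define KQ where "KQ = s^2/2 + M1 + KR"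
  define K where "K = KQ + 2 * (M1 + KR) / s"
  have KR0: "0 \<le> KR" unfolding KR_def using s0 M10 by simp
  have KQ0: "0 \<le> KQ" unfolding KQ_def using s0 M10 KR0 by simp
  have K0: "0 \<le> K" unfolding K_def using s0 M10 KR0 KQ0 by simp
  have k01: "0 < \<kappa>0" "\<kappa>0 \<le> 1" unfolding \<kappa>0_def using s0 M10 by (auto simp: field_simps)
  show ?thesis
  proof (rule exI[of _ K], rule exI[of _ \<kappa>0], intro conjI allI impI)
    show "0 < \<kappa>0" "\<kappa>0 \<le> 1" "0 \<le> K" using k01 K0 by auto
    fix \<kappa> \<alpha> \<beta> \<gamma> :: real assume k: "0 < \<kappa>" "\<kappa> \<le> \<kappa>0"
    have k1: "\<kappa> \<le> 1" using k k01 by simp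
    have ksm: "\<kappa> * (s + M1) \<le> 1"
    proof -
      have "\<kappa> * (s + M1) \<le> \<kappa>0 * (s + M1)" using k s0 M10 by (intro mult_right_mono) auto
      also have "\<dots> \<le> 1" unfolding \<kappa>0_def using s0 M10 by (simp add: field_simps)
      finally show ?thesis .
    qed
    define t where "t l = 2 / (s * real p) * (\<beta> * cos (th p l) + \<gamma> * sin (th p l))" for l
    define b where "b l = - \<i> * complex_of_real (t l)" for l
    define a where "a l = complex_of_real (\<alpha> / real p) + complex_of_real (1/\<kappa>) * b l" for l
    show "\<exists>a. \<forall>z\<in>Khat. norm (complex_of_real (\<alpha> + \<beta> * (fst z - 1/2) + \<gamma> * (snd z - 1/2)) -
        (\<Sum>l\<in>{1..p}. a l * gpw \<kappa> d (th p l) q centroid_Khat z)) \<le> K * \<kappa>^2 * (\<bar>\<alpha>\<bar> + \<bar>\<beta>\<bar> + \<bar>\<gamma>\<bar>)"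
    proof (intro exI[of _ a] ballI)
      fix z assume zK: "z \<in> Khat"
      define X where "X = fst z - 1/2"
      define Y where "Y = snd z - 1/2"
      have XY: "\<bar>X\<bar> \<le> 1/2" "\<bar>Y\<bar> \<le> 1/2" using zK unfolding Khat_def X_def Y_def
        by (auto simp: cbox_Pair_eq mem_box Basis_prod_def abs_if)
      define u where "u l = cos (th p l) * X + sin (th p l) * Y" for l
      define w where "w l = \<i> * complex_of_real (\<kappa> * s * u l)" for l
      define H where "H l = Hf \<kappa> d (th p l) q z" for l
      define \<phi> where "\<phi> l = gpw \<kappa> d (th p l) q centroid_Khat z" for l
      define R where "R l = \<phi> l - 1 - w l - (w l)^2/2 - H l" for l
      define Q where "Q l = (w l)^2/2 + H l + R l" for l
      have p0: "0 < p" using p by simp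
      have kk0: "\<kappa>^2 \<le> \<kappa>^1" "\<kappa>^4 \<le> \<kappa>^3" "\<kappa>^3 \<le> \<kappa>^2" using k k1 by (intro power_decreasing; simp)+
      then have kk: "\<kappa>^2 \<le> \<kappa>" "\<kappa>^4 \<le> \<kappa>^3" "\<kappa>^3 \<le> \<kappa>^2" by simp_all
      have \<phi>eq: "\<phi> l = exp (w l + H l)" for l
        unfolding \<phi>_def w_def H_def u_def gpw_decomp s_def X_def Y_def ..
      have hu: "\<bar>u l\<bar> \<le> 1" for l
      proof -
        have "\<bar>cos (th p l) * X\<bar> \<le> 1 * (1/2)" "\<bar>sin (th p l) * Y\<bar> \<le> 1 * (1/2)"
          unfolding abs_mult using XY by (intro mult_mono; simp)+
        then show ?thesis unfolding u_def by linarith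
      qed
      have hw: "norm (w l) \<le> \<kappa> * s" for l
      proof -
        have "norm (w l) = \<kappa> * s * \<bar>u l\<bar>" unfolding w_def using k s0 by (simp add: norm_mult abs_mult)
        also have "\<dots> \<le> \<kappa> * s * 1" using k s0 hu[of l] by (intro mult_left_mono) auto
        finally show ?thesis by simp
      qed
      have zb: "\<bar>fst z - 1/2\<bar> \<le> 1/2" "\<bar>snd z - 1/2\<bar> \<le> 1/2" using XY unfolding X_def Y_def .
      have hH: "norm (H l) \<le> M1 * \<kappa>^2" for l
        using Hf_bounds(1)[OF M(2) M(1) k(1) k1 zb] unfolding H_def M1_def by (simp add: mult.assoc)
      have hHd: "norm (H l - H 1) \<le> M1 * \<kappa>^3" for l
        using Hf_bounds(2)[OF M(2) M(1) k(1) k1 zb] unfolding H_def M1_def by (simp add: mult.assoc)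
      have hR: "norm (R l) \<le> KR * \<kappa>^3" for l
      proof -
        define P where "P = w l + H l"
        have nP: "norm P \<le> \<kappa> * (s + M1)"
        proof -
          have "norm P \<le> norm (w l) + norm (H l)" unfolding P_def by (rule norm_triangle_ineq)
          also have "\<dots> \<le> \<kappa> * s + M1 * \<kappa>" using hw[of l] hH[of l] kk M10 mult_left_mono[of "\<kappa>^2" \<kappa> M1] by linarith
          finally show ?thesis by (simp add: algebra_simps)
        qed
        have nP1: "norm P \<le> 1" using nP ksm by linarith
        have eR: "R l = (exp P - 1 - P - P^2/2) + w l * H l + (H l)^2/2"
          unfolding R_def \<phi>eq P_def by (simp add: power2_eq_square algebra_simps)
        have "norm (R l) \<le> norm (exp P - 1 - P - P^2/2) + norm (w l * H l) + norm ((H l)^2/2)"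
          unfolding eR by (rule order_trans[OF norm_triangle_ineq add_right_mono[OF norm_triangle_ineq]])
        also have "norm (exp P - 1 - P - P^2/2) \<le> 3 * (\<kappa> * (s + M1))^3"
          using exp_rem3[OF nP1] power_mono[OF nP, of 3] by simp
        also have "norm (w l * H l) \<le> (\<kappa> * s) * (M1 * \<kappa>^2)"
          unfolding norm_mult using hw[of l] hH[of l] k s0 by (intro mult_mono) auto
        also have "norm ((H l)^2/2) \<le> (M1 * \<kappa>^2)^2/2"
          unfolding norm_divide norm_power using hH[of l] by (simp add: power_mono)
        also have "3 * (\<kappa> * (s + M1))^3 + (\<kappa> * s) * (M1 * \<kappa>^2) + (M1 * \<kappa>^2)^2/2
            = (3 * (s + M1)^3 + s * M1) * \<kappa>^3 + (M1^2 / 2) * \<kappa>^4"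
          by (simp add: power_mult_distrib power2_eq_square power3_eq_cube power4_eq_xxxx algebra_simps)
        also have "(M1^2 / 2) * \<kappa>^4 \<le> M1^2 * \<kappa>^3" using kk(2) by (intro mult_mono) auto
        finally show ?thesis unfolding KR_def by (simp add: algebra_simps)
      qed
      have hQ: "norm (Q l) \<le> KQ * \<kappa>^2" for l
      proof -
        have t: "norm (Q l) \<le> norm ((w l)^2/2) + norm (H l) + norm (R l)" unfolding Q_def
          by (rule order_trans[OF norm_triangle_ineq add_right_mono[OF norm_triangle_ineq]])
        have a: "norm ((w l)^2/2) \<le> (\<kappa> * s)^2/2"
          unfolding norm_divide norm_power using hw[of l] by (simp add: power_mono)
        have c: "KR * \<kappa>^3 \<le> KR * \<kappa>^2" using kk KR0 by (intro mult_left_mono) auto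
        have e: "(\<kappa> * s)^2/2 + M1 * \<kappa>^2 + KR * \<kappa>^2 = KQ * \<kappa>^2"
          unfolding KQ_def by (simp add: power_mult_distrib algebra_simps)
        show ?thesis using t a c e hH[of l] hR[of l] by linarith
      qed
      note RS = real_sums[OF p]
      have I1: "(\<Sum>l\<in>{1..p}. w l) = 0"
      proof -
        have "(\<Sum>l\<in>{1..p}. w l) = \<i> * complex_of_real (\<kappa> * s * (\<Sum>l\<in>{1..p}. u l))"
          unfolding w_def by (simp add: sum_distrib_left of_real_sum)
        also have "(\<Sum>l\<in>{1..p}. u l) = 0" unfolding u_def by (rule RS(1))
        finally show ?thesis by simp
      qed
      have St: "(\<Sum>l\<in>{1..p}. t l) = 0"
      proof -
        have "(\<Sum>l\<in>{1..p}. t l) = 2 / (s * real p) * (\<Sum>l\<in>{1..p}. \<beta> * cos (th p l) + \<gamma> * sin (th p l))"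
          unfolding t_def by (simp only: sum_distrib_left)
        also have "(\<Sum>l\<in>{1..p}. \<beta> * cos (th p l) + \<gamma> * sin (th p l)) = 0" by (rule RS(2))
        finally show ?thesis by simp
      qed
      have I2: "(\<Sum>l\<in>{1..p}. b l) = 0"
      proof -
        have "(\<Sum>l\<in>{1..p}. b l) = - \<i> * complex_of_real (\<Sum>l\<in>{1..p}. t l)"
          unfolding b_def by (simp only: sum_distrib_left of_real_sum)
        then show ?thesis by (simp only: St of_real_0 mult_zero_right)
      qed
      have I3: "(\<Sum>l\<in>{1..p}. b l * w l) = complex_of_real (\<kappa> * (\<beta> * X + \<gamma> * Y))"
      proof -
        have "b l * w l = complex_of_real (\<kappa> * s * (2 / (s * real p)) * ((\<beta> * cos (th p l) + \<gamma> * sin (th p l)) * u l))" for l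
          unfolding b_def w_def t_def by (simp add: algebra_simps)
        then have "(\<Sum>l\<in>{1..p}. b l * w l) = complex_of_real (\<kappa> * s * (2 / (s * real p)) *
            (\<Sum>l\<in>{1..p}. (\<beta> * cos (th p l) + \<gamma> * sin (th p l)) * u l))"
          by (simp add: sum_distrib_left of_real_sum)
        also have "(\<Sum>l\<in>{1..p}. (\<beta> * cos (th p l) + \<gamma> * sin (th p l)) * u l) = real p / 2 * (\<beta> * X + \<gamma> * Y)"
          unfolding u_def by (rule RS(3))
        finally have e: "(\<Sum>l\<in>{1..p}. b l * w l) = complex_of_real (\<kappa> * s * (2 / (s * real p)) * (real p / 2 * (\<beta> * X + \<gamma> * Y)))" .
        have hh: "\<kappa> * s * (2 / (s * real p)) * (real p / 2 * (\<beta> * X + \<gamma> * Y)) = \<kappa> * (\<beta> * X + \<gamma> * Y)"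
          using s0 p0 by (simp add: field_simps)
        show ?thesis unfolding e hh by (rule refl)
      qed
      have I4: "(\<Sum>l\<in>{1..p}. b l * (w l)^2) = 0"
      proof -
        have "b l * (w l)^2 = \<i> * complex_of_real ((\<kappa> * s)^2 * (2 / (s * real p)) * ((\<beta> * cos (th p l) + \<gamma> * sin (th p l)) * (u l)^2))" for l
          unfolding b_def w_def t_def by (simp add: power2_eq_square algebra_simps)
        then have "(\<Sum>l\<in>{1..p}. b l * (w l)^2) = \<i> * complex_of_real ((\<kappa> * s)^2 * (2 / (s * real p)) *
            (\<Sum>l\<in>{1..p}. (\<beta> * cos (th p l) + \<gamma> * sin (th p l)) * (u l)^2))"
          by (simp add: sum_distrib_left of_real_sum)
        also have "(\<Sum>l\<in>{1..p}. (\<beta> * cos (th p l) + \<gamma> * sin (th p l)) * (u l)^2) = 0"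
          unfolding u_def by (rule RS(4))
        finally show ?thesis by simp
      qed
      have \<phi>Q: "\<phi> l = 1 + w l + Q l" for l unfolding Q_def R_def by simp
      have b\<phi>: "b l * \<phi> l = b l + b l * w l + (b l * (w l)^2)/2 + b l * (H l - H 1) + H 1 * b l + b l * R l" for l
        unfolding R_def by (simp add: algebra_simps)
      have Sa: "(\<Sum>l\<in>{1..p}. a l * \<phi> l) = complex_of_real (\<alpha> / real p) * (\<Sum>l\<in>{1..p}. \<phi> l)
           + complex_of_real (1/\<kappa>) * (\<Sum>l\<in>{1..p}. b l * \<phi> l)"
        unfolding a_def by (simp add: distrib_right sum.distrib sum_distrib_left mult.assoc)
      have S\<phi>: "(\<Sum>l\<in>{1..p}. \<phi> l) = of_nat p + (\<Sum>l\<in>{1..p}. Q l)"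
        unfolding \<phi>Q using I1 by (simp add: sum.distrib)
      have Sb\<phi>: "(\<Sum>l\<in>{1..p}. b l * \<phi> l) = complex_of_real (\<kappa> * (\<beta> * X + \<gamma> * Y))
           + (\<Sum>l\<in>{1..p}. b l * (H l - H 1)) + (\<Sum>l\<in>{1..p}. b l * R l)"
      proof -
        have "(\<Sum>l\<in>{1..p}. b l * \<phi> l) = (\<Sum>l\<in>{1..p}. b l) + (\<Sum>l\<in>{1..p}. b l * w l) + (\<Sum>l\<in>{1..p}. b l * (w l)^2)/2
            + (\<Sum>l\<in>{1..p}. b l * (H l - H 1)) + H 1 * (\<Sum>l\<in>{1..p}. b l) + (\<Sum>l\<in>{1..p}. b l * R l)"
          unfolding b\<phi> by (simp only: sum.distrib sum_divide_distrib sum_distrib_left)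
        then show ?thesis by (simp only: I2 I3 I4) simp
      qed
      have fz: "complex_of_real (\<alpha> + \<beta> * (fst z - 1/2) + \<gamma> * (snd z - 1/2)) = complex_of_real \<alpha> + complex_of_real (\<beta> * X + \<gamma> * Y)"
        unfolding X_def Y_def by simp
      have e1: "complex_of_real (\<alpha> / real p) * of_nat p = complex_of_real \<alpha>" 
      proof -
        have "complex_of_real (\<alpha> / real p) * of_nat p = complex_of_real (\<alpha> / real p * real p)" by simp
        also have "\<alpha> / real p * real p = \<alpha>" using p0 by simp
        finally show ?thesis .
      qed
      have e2: "complex_of_real (1/\<kappa>) * complex_of_real (\<kappa> * (\<beta> * X + \<gamma> * Y)) = complex_of_real (\<beta> * X + \<gamma> * Y)"
      proof -
        have "complex_of_real (1/\<kappa>) * complex_of_real (\<kappa> * (\<beta> * X + \<gamma> * Y)) = complex_of_real (1/\<kappa> * (\<kappa> * (\<beta> * X + \<gamma> * Y)))"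
          by (simp only: of_real_mult)
        also have "1/\<kappa> * (\<kappa> * (\<beta> * X + \<gamma> * Y)) = \<beta> * X + \<gamma> * Y" using k by simp
        finally show ?thesis .
      qed
      define B1 where "B1 = (\<Sum>l\<in>{1..p}. b l * (H l - H 1))"
      define B2 where "B2 = (\<Sum>l\<in>{1..p}. b l * R l)"
      define SQ where "SQ = (\<Sum>l\<in>{1..p}. Q l)"
      have diff: "complex_of_real (\<alpha> + \<beta> * (fst z - 1/2) + \<gamma> * (snd z - 1/2)) - (\<Sum>l\<in>{1..p}. a l * \<phi> l)
          = - (complex_of_real (\<alpha> / real p) * SQ) - complex_of_real (1/\<kappa>) * (B1 + B2)"
        unfolding fz Sa S\<phi> Sb\<phi> B1_def[symmetric] B2_def[symmetric] SQ_def[symmetric] by (rule ring_aux[OF e1 e2])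
      define Bb where "Bb = 2 / (s * real p) * (\<bar>\<beta>\<bar> + \<bar>\<gamma>\<bar>)"
      have Bb0: "0 \<le> Bb" unfolding Bb_def using s0 by simp
      have hb: "norm (b l) \<le> Bb" for l
      proof -
        have "norm (b l) = \<bar>t l\<bar>" unfolding b_def by (simp add: norm_mult)
        also have "\<dots> = 2 / (s * real p) * \<bar>\<beta> * cos (th p l) + \<gamma> * sin (th p l)\<bar>"
        proof -
          have nn: "0 \<le> 2 / (s * real p)" using s0 by simp
          show ?thesis unfolding t_def by (simp only: abs_mult abs_of_nonneg[OF nn])
        qed
        also have "\<dots> \<le> 2 / (s * real p) * (\<bar>\<beta>\<bar> + \<bar>\<gamma>\<bar>)"
        proof (rule mult_left_mono)
          have "\<bar>\<beta> * cos (th p l)\<bar> \<le> \<bar>\<beta>\<bar> * 1" "\<bar>\<gamma> * sin (th p l)\<bar> \<le> \<bar>\<gamma>\<bar> * 1"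
            unfolding abs_mult by (intro mult_left_mono; simp)+
          then show "\<bar>\<beta> * cos (th p l) + \<gamma> * sin (th p l)\<bar> \<le> \<bar>\<beta>\<bar> + \<bar>\<gamma>\<bar>" by linarith
        qed (use s0 in simp)
        finally show ?thesis unfolding Bb_def .
      qed
      have nSQ: "norm SQ \<le> real p * (KQ * \<kappa>^2)"
      proof -
        have "norm SQ \<le> (\<Sum>l\<in>{1..p}. KQ * \<kappa>^2)" unfolding SQ_def by (rule sum_norm_le) (rule hQ)
        then show ?thesis by simp
      qed
      have nB1: "norm B1 \<le> real p * (Bb * (M1 * \<kappa>^3))"
      proof -
        have "norm B1 \<le> (\<Sum>l\<in>{1..p}. Bb * (M1 * \<kappa>^3))" unfolding B1_def
          by (rule sum_norm_le) (unfold norm_mult, intro mult_mono hb hHd, auto simp: Bb0)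
        then show ?thesis by simp
      qed
      have nB2: "norm B2 \<le> real p * (Bb * (KR * \<kappa>^3))"
      proof -
        have "norm B2 \<le> (\<Sum>l\<in>{1..p}. Bb * (KR * \<kappa>^3))" unfolding B2_def
          by (rule sum_norm_le) (unfold norm_mult, intro mult_mono hb hR, auto simp: Bb0)
        then show ?thesis by simp
      qed
      have n1: "norm (complex_of_real (\<alpha> / real p) * SQ) \<le> \<bar>\<alpha>\<bar> * KQ * \<kappa>^2"
      proof -
        have "norm (complex_of_real (\<alpha> / real p) * SQ) = \<bar>\<alpha>\<bar> / real p * norm SQ" by (simp only: norm_mult norm_of_real abs_divide abs_of_nat)
        also have "\<dots> \<le> \<bar>\<alpha>\<bar> / real p * (real p * (KQ * \<kappa>^2))" using nSQ by (intro mult_left_mono) auto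
        also have "\<dots> = \<bar>\<alpha>\<bar> * KQ * \<kappa>^2" using p0 by simp
        finally show ?thesis .
      qed
      have n2: "norm (complex_of_real (1/\<kappa>) * (B1 + B2)) \<le> 2 * (M1 + KR) / s * (\<bar>\<beta>\<bar> + \<bar>\<gamma>\<bar>) * \<kappa>^2"
      proof -
        have "norm (complex_of_real (1/\<kappa>) * (B1 + B2)) = 1/\<kappa> * norm (B1 + B2)" using k by (simp only: norm_mult norm_of_real abs_divide abs_one abs_of_pos)
        also have "\<dots> \<le> 1/\<kappa> * (real p * (Bb * (M1 * \<kappa>^3)) + real p * (Bb * (KR * \<kappa>^3)))"
          using nB1 nB2 norm_triangle_ineq[of B1 B2] k by (intro mult_left_mono) auto
        also have "\<dots> = 2 * (M1 + KR) / s * (\<bar>\<beta>\<bar> + \<bar>\<gamma>\<bar>) * \<kappa>^2"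
          unfolding Bb_def using k s0 p0 by (simp add: field_simps power2_eq_square power3_eq_cube)
        finally show ?thesis .
      qed
      have fin: "\<bar>\<alpha>\<bar> * KQ * \<kappa>^2 + 2 * (M1 + KR) / s * (\<bar>\<beta>\<bar> + \<bar>\<gamma>\<bar>) * \<kappa>^2 \<le> K * \<kappa>^2 * (\<bar>\<alpha>\<bar> + \<bar>\<beta>\<bar> + \<bar>\<gamma>\<bar>)"
      proof -
        have a1: "\<bar>\<alpha>\<bar> * KQ * \<kappa>^2 \<le> \<bar>\<alpha>\<bar> * K * \<kappa>^2"
          unfolding K_def using s0 M10 KR0 by (intro mult_right_mono mult_left_mono) auto
        have a2: "2 * (M1 + KR) / s * (\<bar>\<beta>\<bar> + \<bar>\<gamma>\<bar>) * \<kappa>^2 \<le> K * (\<bar>\<beta>\<bar> + \<bar>\<gamma>\<bar>) * \<kappa>^2"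
          unfolding K_def using KQ0 by (intro mult_right_mono) auto
        have "\<bar>\<alpha>\<bar> * K * \<kappa>^2 + K * (\<bar>\<beta>\<bar> + \<bar>\<gamma>\<bar>) * \<kappa>^2 = K * \<kappa>^2 * (\<bar>\<alpha>\<bar> + \<bar>\<beta>\<bar> + \<bar>\<gamma>\<bar>)"
          by (simp add: algebra_simps)
        then show ?thesis using a1 a2 by linarith
      qed
      show "norm (complex_of_real (\<alpha> + \<beta> * (fst z - 1/2) + \<gamma> * (snd z - 1/2)) -
        (\<Sum>l\<in>{1..p}. a l * gpw \<kappa> d (th p l) q centroid_Khat z)) \<le> K * \<kappa>^2 * (\<bar>\<alpha>\<bar> + \<bar>\<beta>\<bar> + \<bar>\<gamma>\<bar>)"
        unfolding \<phi>_def[symmetric] diff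
        using norm_triangle_ineq4[of "- (complex_of_real (\<alpha> / real p) * SQ)" "complex_of_real (1/\<kappa>) * (B1 + B2)"] n1 n2 fin
        by simp
    qed
  qed
qed

lemma quad_int: "integral {0..1} (\<lambda>t::real. (A + B*(t-1/2))^2 + C) = A^2 + B^2/12 + C"
proof -
  define F where "F t = A^2 * t + A * B * (t - 1/2)^2 + B^2 * (t - 1/2)^3 / 3 + C * t" for t :: real
  have "((\<lambda>t::real. (A + B*(t-1/2))^2 + C) has_integral (F 1 - F 0)) {0..1}"
  proof (rule fundamental_theorem_of_calculus)
    fix x :: real assume "x \<in> {0..1}"
    have "(F has_real_derivative ((A + B*(x-1/2))^2 + C)) (at x within {0..1})"
      unfolding F_def
      by (rule derivative_eq_intros refl | simp)+ (simp add: power2_eq_square algebra_simps)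
    then show "(F has_vector_derivative ((A + B*(x-1/2))^2 + C)) (at x within {0..1})"
      by (simp add: has_real_derivative_iff_has_vector_derivative)
  qed simp
  moreover have "F 1 - F 0 = A^2 + B^2/12 + C" unfolding F_def by (simp add: power2_eq_square power3_eq_cube field_simps)
  ultimately show ?thesis by (simp add: integral_unique)
qed

lemma L2_lin:
  "L2_norm Khat (\<lambda>z. complex_of_real (\<alpha> + \<beta> * (fst z - 1/2) + \<gamma> * (snd z - 1/2))) = sqrt (\<alpha>^2 + \<beta>^2/12 + \<gamma>^2/12)"
proof -
  define g where "g z = (\<alpha> + \<beta> * (fst z - 1/2) + \<gamma> * (snd z - 1/2))^2" for z :: "real \<times> real"
  have e: "(\<lambda>z. (cmod (complex_of_real (\<alpha> + \<beta> * (fst z - 1/2) + \<gamma> * (snd z - 1/2))))^2) = g"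
    unfolding g_def norm_of_real power2_abs ..
  have c: "continuous_on (cbox (0,0) (1,1)) g" unfolding g_def by (intro continuous_intros)
  have "integral Khat g = integral (cbox 0 1) (\<lambda>x. integral (cbox 0 1) (\<lambda>y. g (x, y)))"
    unfolding Khat_def by (rule integral_prod_continuous[OF c])
  also have "\<dots> = integral {0..1} (\<lambda>x. (\<alpha> + \<beta> * (x - 1/2))^2 + \<gamma>^2/12)"
  proof -
    have "integral (cbox 0 1) (\<lambda>y. g (x, y)) = (\<alpha> + \<beta> * (x - 1/2))^2 + \<gamma>^2/12" for x :: real
      using quad_int[of "\<alpha> + \<beta> * (x - 1/2)" \<gamma> 0] unfolding g_def by simp
    then show ?thesis by simp
  qed
  also have "\<dots> = \<alpha>^2 + \<beta>^2/12 + \<gamma>^2/12" by (rule quad_int)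
  finally show ?thesis unfolding L2_norm_def e by simp
qed

lemma L2_lin_lower:
  "(\<bar>\<alpha>\<bar> + \<bar>\<beta>\<bar> + \<bar>\<gamma>\<bar>) / 6 \<le> L2_norm Khat (\<lambda>z. complex_of_real (\<alpha> + \<beta> * (fst z - 1/2) + \<gamma> * (snd z - 1/2)))"
proof -
  have "((\<bar>\<alpha>\<bar> + \<bar>\<beta>\<bar> + \<bar>\<gamma>\<bar>) / 6)^2 \<le> \<alpha>^2 + \<beta>^2/12 + \<gamma>^2/12"
  proof -
    define a where "a = \<bar>\<alpha>\<bar>"
    define b where "b = \<bar>\<beta>\<bar>"
    define c where "c = \<bar>\<gamma>\<bar>"
    have sq: "a^2 = \<alpha>^2" "b^2 = \<beta>^2" "c^2 = \<gamma>^2" unfolding a_def b_def c_def by simp_all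
    have "3*(a^2+b^2+c^2) - (a+b+c)^2 = (a-b)^2+(b-c)^2+(a-c)^2" by (simp add: power2_eq_square algebra_simps)
    moreover have "0 \<le> (a-b)^2+(b-c)^2+(a-c)^2" by simp
    ultimately have "(a+b+c)^2 \<le> 3*(a^2+b^2+c^2)" by linarith
    then have "(\<bar>\<alpha>\<bar> + \<bar>\<beta>\<bar> + \<bar>\<gamma>\<bar>)^2 \<le> 3 * (\<alpha>^2 + \<beta>^2 + \<gamma>^2)"
      unfolding sq by (simp add: a_def b_def c_def)
    then show ?thesis using zero_le_power2[of \<alpha>] zero_le_power2[of \<beta>] zero_le_power2[of \<gamma>] by (simp add: power_divide) (smt (verit) zero_le_power2)
  qed
  then have "(\<bar>\<alpha>\<bar> + \<bar>\<beta>\<bar> + \<bar>\<gamma>\<bar>) / 6 \<le> sqrt (\<alpha>^2 + \<beta>^2/12 + \<gamma>^2/12)"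
    by (rule real_le_rsqrt)
  then show ?thesis unfolding L2_lin .
qed

lemma L2_upper:
  assumes "\<forall>z\<in>Khat. cmod (g z) \<le> B" "0 \<le> B"
  shows "L2_norm Khat g \<le> B"
proof -
  have "integral Khat (\<lambda>z. (cmod (g z))^2) \<le> B^2"
  proof (cases "(\<lambda>z. (cmod (g z))^2) integrable_on Khat")
    case True
    have "integral Khat (\<lambda>z. (cmod (g z))^2) \<le> integral Khat (\<lambda>z. B^2)"
      using True assms by (intro integral_le) (auto simp: Khat_def intro: power_mono)
    also have "\<dots> = B^2" unfolding Khat_def by (simp add: content_Pair)
    finally show ?thesis .
  next
    case False then show ?thesis by (simp add: not_integrable_integral)
  qed
  then have "sqrt (integral Khat (\<lambda>z. (cmod (g z))^2)) \<le> sqrt (B^2)" by (rule real_sqrt_le_mono)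
  also have "sqrt (B^2) = B" using assms(2) by simp
  finally show ?thesis unfolding L2_norm_def .
qed

lemma L2_nonneg: "0 \<le> L2_norm K g"
proof -
  have "0 \<le> integral K (\<lambda>z. (cmod (g z))^2)"
    by (cases "(\<lambda>z. (cmod (g z))^2) integrable_on K") (auto intro: integral_nonneg simp: not_integrable_integral)
  then show ?thesis unfolding L2_norm_def by simp
qed

theorem lemma2:
  fixes \<epsilon> :: "real \<times> real \<Rightarrow> real"
    and D :: "nat \<Rightarrow> nat \<Rightarrow> real \<times> real \<Rightarrow> real"
    and n p q :: nat
  assumes smooth: "smooth_family Khat \<epsilon> D"
    and pos: "\<forall>z\<in>Khat. \<epsilon> z > 0"
    and n: "n \<ge> 2" and p: "p = 2 * n + 1" and q: "q \<ge> n + 1"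
  shows "\<exists>C. \<forall>\<kappa>>0. \<forall>f\<in>P1.
           (INF v\<in>gpw_space \<kappa> (\<lambda>i j. D i j centroid_Khat) p q centroid_Khat. L2_norm Khat (\<lambda>z. f z - v z))
             \<le> C * \<kappa>^2 * \<bar>\<epsilon> centroid_Khat\<bar> * L2_norm Khat f"
proof -
  have cK: "centroid_Khat \<in> Khat" unfolding Khat_def centroid_Khat_def by (auto simp: cbox_Pair_eq)
  define e where "e = \<epsilon> centroid_Khat"
  have e0: "0 < e" using pos cK unfolding e_def by auto
  have d00: "0 < (\<lambda>i j. D i j centroid_Khat) 0 0" using smooth cK e0 unfolding smooth_family_def e_def by auto
  have p3: "3 < p" using n p by simp
  obtain K \<kappa>0 where k0: "0 < \<kappa>0" "\<kappa>0 \<le> 1" and K0: "0 \<le> K"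
    and H: "\<forall>\<kappa> \<alpha> \<beta> \<gamma>. 0 < \<kappa> \<longrightarrow> \<kappa> \<le> \<kappa>0 \<longrightarrow> (\<exists>a. \<forall>z\<in>Khat.
     norm (complex_of_real (\<alpha> + \<beta> * (fst z - 1/2) + \<gamma> * (snd z - 1/2)) -
        (\<Sum>l\<in>{1..p}. a l * gpw \<kappa> (\<lambda>i j. D i j centroid_Khat) (th p l) q centroid_Khat z)) \<le> K * \<kappa>^2 * (\<bar>\<alpha>\<bar> + \<bar>\<beta>\<bar> + \<bar>\<gamma>\<bar>))"
    using approx_point[where d="\<lambda>i j. D i j centroid_Khat" and p=p and q=q, OF d00 p3] by blast
  define C where "C = max (6 * K / e) (1 / (\<kappa>0^2 * e))"
  show ?thesis
  proof (rule exI[of _ C], intro allI impI ballI)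
    fix \<kappa> :: real and f assume k: "0 < \<kappa>" and f: "f \<in> P1"
    obtain a b c where fe: "f = (\<lambda>z. complex_of_real (a + b * fst z + c * snd z))" using f unfolding P1_def by blast
    define \<alpha> where "\<alpha> = a + b/2 + c/2"
    have fe2: "f = (\<lambda>z. complex_of_real (\<alpha> + b * (fst z - 1/2) + c * (snd z - 1/2)))"
      unfolding fe \<alpha>_def by (rule ext) (simp add: algebra_simps)
    define G where "G = gpw_space \<kappa> (\<lambda>i j. D i j centroid_Khat) p q centroid_Khat"
    have bdd: "bdd_below ((\<lambda>v. L2_norm Khat (\<lambda>z. f z - v z)) ` G)"
      by (rule bdd_belowI[of _ 0]) (auto intro: L2_nonneg)
    have L2f0: "0 \<le> L2_norm Khat f" by (rule L2_nonneg)
    have ae: "\<bar>\<epsilon> centroid_Khat\<bar> = e" using e0 unfolding e_def by simp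
    show "(INF v\<in>gpw_space \<kappa> (\<lambda>i j. D i j centroid_Khat) p q centroid_Khat. L2_norm Khat (\<lambda>z. f z - v z))
             \<le> C * \<kappa>^2 * \<bar>\<epsilon> centroid_Khat\<bar> * L2_norm Khat f"
      unfolding G_def[symmetric] ae
    proof (cases "\<kappa> \<le> \<kappa>0")
      case True
      obtain A where A: "\<forall>z\<in>Khat. norm (complex_of_real (\<alpha> + b * (fst z - 1/2) + c * (snd z - 1/2)) -
        (\<Sum>l\<in>{1..p}. A l * gpw \<kappa> (\<lambda>i j. D i j centroid_Khat) (th p l) q centroid_Khat z)) \<le> K * \<kappa>^2 * (\<bar>\<alpha>\<bar> + \<bar>b\<bar> + \<bar>c\<bar>)"
        using H k True by blast
      define v where "v = (\<lambda>z. \<Sum>l\<in>{1..p}. A l * gpw \<kappa> (\<lambda>i j. D i j centroid_Khat) (2 * pi * (real l - 1) / real p) q centroid_Khat z)"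
      have vG: "v \<in> G" unfolding G_def gpw_space_def v_def by blast
      have "(INF v\<in>G. L2_norm Khat (\<lambda>z. f z - v z)) \<le> L2_norm Khat (\<lambda>z. f z - v z)"
        by (rule cINF_lower[OF bdd vG])
      also have "\<dots> \<le> K * \<kappa>^2 * (\<bar>\<alpha>\<bar> + \<bar>b\<bar> + \<bar>c\<bar>)"
        by (rule L2_upper) (use A K0 in \<open>auto simp: fe2 v_def th_def\<close>)
      also have "\<dots> \<le> K * \<kappa>^2 * (6 * L2_norm Khat f)"
        using L2_lin_lower[of \<alpha> b c] K0 unfolding fe2[symmetric] by (intro mult_left_mono) auto
      also have "\<dots> = (6 * K / e) * \<kappa>^2 * e * L2_norm Khat f" using e0 by (simp add: field_simps)
      also have "\<dots> \<le> C * \<kappa>^2 * e * L2_norm Khat f"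
        unfolding C_def using e0 L2f0 by (intro mult_right_mono) auto
      finally show "(INF v\<in>G. L2_norm Khat (\<lambda>z. f z - v z)) \<le> C * \<kappa>^2 * e * L2_norm Khat f" .
    next
      case False
      define v where "v = (\<lambda>z. \<Sum>l\<in>{1..p}. (\<lambda>_. 0) l * gpw \<kappa> (\<lambda>i j. D i j centroid_Khat) (2 * pi * (real l - 1) / real p) q centroid_Khat z)"
      have vG: "v \<in> G" unfolding G_def gpw_space_def v_def by (rule CollectI, rule exI[of _ "\<lambda>_. 0"], simp)
      have v0: "(\<lambda>z. f z - v z) = f" unfolding v_def by simp
      have "(INF v\<in>G. L2_norm Khat (\<lambda>z. f z - v z)) \<le> L2_norm Khat (\<lambda>z. f z - v z)"
        by (rule cINF_lower[OF bdd vG])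
      also have "\<dots> = 1 * L2_norm Khat f" unfolding v0 by simp
      also have "\<dots> \<le> C * \<kappa>^2 * e * L2_norm Khat f"
      proof (rule mult_right_mono[OF _ L2f0])
        have "\<kappa>0^2 \<le> \<kappa>^2" using False k0 by (intro power_mono) auto
        have "1 = (1 / (\<kappa>0^2 * e)) * \<kappa>0^2 * e" using e0 k0 by (simp add: field_simps)
        also have "\<dots> \<le> C * \<kappa>^2 * e"
        proof -
          have c1: "1 / (\<kappa>0^2 * e) \<le> C" unfolding C_def by simp
          have c2: "0 < 1 / (\<kappa>0^2 * e)" using e0 k0 by simp
          have c3: "0 \<le> C" using c1 c2 by linarith
          show ?thesis using e0 k0 c1 c3 \<open>\<kappa>0^2 \<le> \<kappa>^2\<close>
            by (intro mult_right_mono mult_mono) auto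
        qed
        finally show "1 \<le> C * \<kappa>^2 * e" .
      qed
      finally show "(INF v\<in>G. L2_norm Khat (\<lambda>z. f z - v z)) \<le> C * \<kappa>^2 * e * L2_norm Khat f" .
    qed
  qed
qed


end
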